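(* Suppose $\operatorname{char}\mathcal{F}=0$ (so $\mathcal{F}$ is a finite extension of $\mathbb{Q}_p$), fix $\alpha\in\mathcal{F}\setminus\{0\}$, a positive integer $K$, $z\in\mathcal{F}$ with $|z|_\mathfrak{p}>1$, and $\delta>0$. Let $(r_n)$ be a strictly increasing sequence of positive integers with $\lim_{n\to\infty}(r_{n+1}-r_n)=\infty$ and $p^K\nmid r_n$ for all $n$. Then for any sequence $(b_n)$ in $\mathcal{O}$, the set $$E(r_n,b_n)=\{x\in D(z,\delta):|x|_\mathfrak{p}>1,\ \lim_{n\to\infty}([\alpha x^{r_n}]-b_n)=0\}$$ has $\dim_{\mathcal H}E(r_n,b_n)=1$.
   Context: $\mathcal{F}$ has valuation ring $\mathcal{O}$, normalized absolute value $|\cdot|_\mathfrak{p}$, prime element $\pi$; $[x]=\sum_{n\ge0}c_n\pi^n$ for $x=\sum_{n\ge v}c_n\pi^n$ with digits in a fixed representative set $C\ni0$ of $\mathcal{O}/\mathfrak{p}$. $D(z,\delta)=\{x:|x-z|_\mathfrak{p}\le\delta\}$. Limits are with respect to $|\cdot|_\mathfrak{p}$; Hausdorff dimension is with respect to $|x-y|_\mathfrak{p}$. *)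

theory Defs
  imports "HOL-Analysis.Analysis"
begin

text \<open>A non-archimedean local field of characteristic 0 is modelled as a type
  'a of class field_char_0 together with a normalized absolute value v,
  a prime element prm and a fixed set C of representatives (containing 0)
  of the residue field O/p.\<close>

definition local_field :: "('a::field_char_0 \<Rightarrow> real) \<Rightarrow> 'a \<Rightarrow> 'a set \<Rightarrow> bool" where
  "local_field v prm C \<longleftrightarrow>
     v 0 = 0 \<and> (\<forall>x. x \<noteq> 0 \<longrightarrow> v x > 0) \<and>
     (\<forall>x y. v (x * y) = v x * v y) \<and>
     (\<forall>x y. v (x + y) \<le> max (v x) (v y)) \<and>
     0 < v prm \<and> v prm < 1 \<and>
     (\<forall>x. x \<noteq> 0 \<longrightarrow> (\<exists>k::int. v x = v prm powi k)) \<and>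
     finite C \<and> 0 \<in> C \<and> (\<forall>c\<in>C. v c \<le> 1) \<and>
     (\<forall>x. v x \<le> 1 \<longrightarrow> (\<exists>!c. c \<in> C \<and> v (x - c) < 1)) \<and>
     v prm = 1 / real (card C) \<and>
     (\<forall>f::nat \<Rightarrow> 'a. (\<forall>e>0. \<exists>N. \<forall>m\<ge>N. \<forall>n\<ge>N. v (f m - f n) < e)
          \<longrightarrow> (\<exists>L. (\<lambda>n. v (f n - L)) \<longlonglongrightarrow> 0))"

definition p_tendsto :: "('a::field_char_0 \<Rightarrow> real) \<Rightarrow> (nat \<Rightarrow> 'a) \<Rightarrow> 'a \<Rightarrow> bool" where
  "p_tendsto v f L \<longleftrightarrow> (\<lambda>n. v (f n - L)) \<longlonglongrightarrow> 0"

definition digit_exp :: "('a::field_char_0 \<Rightarrow> real) \<Rightarrow> 'a \<Rightarrow> 'a set \<Rightarrow> 'a \<Rightarrow> (int \<Rightarrow> 'a) \<Rightarrow> bool" where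
  "digit_exp v prm C x c \<longleftrightarrow> (\<forall>n. c n \<in> C) \<and> (\<exists>N. \<forall>n<N. c n = 0) \<and>
     p_tendsto v (\<lambda>m. \<Sum>n\<in>{- int m..int m}. c n * prm powi n) x"

definition int_part :: "('a::field_char_0 \<Rightarrow> real) \<Rightarrow> 'a \<Rightarrow> 'a set \<Rightarrow> 'a \<Rightarrow> 'a" where
  "int_part v prm C x = (THE y. \<exists>c. digit_exp v prm C x c \<and>
       p_tendsto v (\<lambda>m. \<Sum>n\<in>{0..int m}. c n * prm powi n) y)"

definition p_diam :: "('a::field_char_0 \<Rightarrow> real) \<Rightarrow> 'a set \<Rightarrow> ennreal" where
  "p_diam v S = (SUP x\<in>S. SUP y\<in>S. ennreal (v (x - y)))"

definition hcontent :: "('a::field_char_0 \<Rightarrow> real) \<Rightarrow> real \<Rightarrow> real \<Rightarrow> 'a set \<Rightarrow> ennreal" where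
  "hcontent v s d E = (INF U\<in>{U :: nat \<Rightarrow> 'a set. E \<subseteq> (\<Union>i. U i) \<and> (\<forall>i. p_diam v (U i) \<le> ennreal d)}.
      (\<Sum>i. if U i = {} then 0 else if s = 0 then 1
            else ennreal (enn2real (p_diam v (U i)) powr s)))"

definition hmeasure :: "('a::field_char_0 \<Rightarrow> real) \<Rightarrow> real \<Rightarrow> 'a set \<Rightarrow> ennreal" where
  "hmeasure v s E = (SUP d\<in>{d. d > 0}. hcontent v s d E)"

definition hdim :: "('a::field_char_0 \<Rightarrow> real) \<Rightarrow> 'a set \<Rightarrow> ereal" where
  "hdim v E = Inf (ereal ` {s. 0 \<le> s \<and> hmeasure v s E = 0})"

end

theory Submission
  imports Defs "HOL-Probability.Probability"
begin


locale lfield =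
  fixes v :: "'a::field_char_0 \<Rightarrow> real" and prm :: 'a and C :: "'a set"
  assumes lf: "local_field v prm C"
begin

lemmas lfc = lf[unfolded local_field_def]
lemma v0[simp]: "v 0 = 0" using conjunct1[OF lfc] .
lemma v_pos: "x \<noteq> 0 \<Longrightarrow> v x > 0" using conjunct1[OF conjunct2[OF lfc]] by blast
lemma v_mult: "v (x * y) = v x * v y" using conjunct1[OF conjunct2[OF conjunct2[OF lfc]]] by blast
lemma v_ultra: "v (x + y) \<le> max (v x) (v y)" using conjunct1[OF conjunct2[OF conjunct2[OF conjunct2[OF lfc]]]] by blast
lemma rho_pos: "0 < v prm" using conjunct1[OF conjunct2[OF conjunct2[OF conjunct2[OF conjunct2[OF lfc]]]]] .
lemma rho_lt1: "v prm < 1" using conjunct1[OF conjunct2[OF conjunct2[OF conjunct2[OF conjunct2[OF conjunct2[OF lfc]]]]]] .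
lemma v_discrete: "x \<noteq> 0 \<Longrightarrow> \<exists>k::int. v x = v prm powi k" using conjunct1[OF conjunct2[OF conjunct2[OF conjunct2[OF conjunct2[OF conjunct2[OF conjunct2[OF lfc]]]]]]] by blast
lemma C_fin: "finite C" using conjunct1[OF conjunct2[OF conjunct2[OF conjunct2[OF conjunct2[OF conjunct2[OF conjunct2[OF conjunct2[OF lfc]]]]]]]] .
lemma C0: "0 \<in> C" using conjunct1[OF conjunct2[OF conjunct2[OF conjunct2[OF conjunct2[OF conjunct2[OF conjunct2[OF conjunct2[OF conjunct2[OF lfc]]]]]]]]] .
lemma C_le1: "c \<in> C \<Longrightarrow> v c \<le> 1" using conjunct1[OF conjunct2[OF conjunct2[OF conjunct2[OF conjunct2[OF conjunct2[OF conjunct2[OF conjunct2[OF conjunct2[OF conjunct2[OF lfc]]]]]]]]]] by blast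
lemma C_res: "v x \<le> 1 \<Longrightarrow> \<exists>!c. c \<in> C \<and> v (x - c) < 1" using conjunct1[OF conjunct2[OF conjunct2[OF conjunct2[OF conjunct2[OF conjunct2[OF conjunct2[OF conjunct2[OF conjunct2[OF conjunct2[OF conjunct2[OF lfc]]]]]]]]]]] by blast
lemma rho_card: "v prm = 1 / real (card C)" using conjunct1[OF conjunct2[OF conjunct2[OF conjunct2[OF conjunct2[OF conjunct2[OF conjunct2[OF conjunct2[OF conjunct2[OF conjunct2[OF conjunct2[OF conjunct2[OF lfc]]]]]]]]]]]] .
lemma complete: "(\<forall>e>0. \<exists>N. \<forall>m\<ge>N. \<forall>n\<ge>N. v (f m - f n) < e) \<Longrightarrow> \<exists>L. (\<lambda>n. v (f n - L)) \<longlonglongrightarrow> 0"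
  using conjunct2[OF conjunct2[OF conjunct2[OF conjunct2[OF conjunct2[OF conjunct2[OF conjunct2[OF conjunct2[OF conjunct2[OF conjunct2[OF conjunct2[OF conjunct2[OF lfc]]]]]]]]]]]] by blast

lemma v_nonneg[simp]: "0 \<le> v x"
  by (cases "x = 0") (auto dest: v_pos)

lemma v_eq0_iff[simp]: "v x = 0 \<longleftrightarrow> x = 0"
  using v_pos by fastforce

lemma v1[simp]: "v 1 = 1"
proof -
  have "v 1 = v 1 * v 1" using v_mult[of 1 1] by simp
  moreover have "v 1 > 0" using v_pos[of 1] by simp
  ultimately show ?thesis by (metis mult_cancel_right1 less_irrefl)
qed

lemma v_minus1: "v (-1) = 1"
proof -
  have h: "v (-1) * v (-1) = 1" using v_mult[of "-1" "-1"] by simp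
  have "v (-1) \<ge> 0" by simp
  from h have "(v (-1) - 1) * (v (-1) + 1) = 0" by (simp add: algebra_simps)
  moreover have "v (-1) + 1 > 0" using \<open>v (-1) \<ge> 0\<close> by linarith
  ultimately show ?thesis by simp
qed

lemma v_uminus[simp]: "v (- x) = v x"
  using v_mult[of "-1" x] v_minus1 by simp

lemma v_sym: "v (x - y) = v (y - x)"
  by (metis minus_diff_eq v_uminus)

lemma v_power: "v (x ^ n) = v x ^ n"
  by (induction n) (auto simp: v_mult)

lemma v_inverse: "v (inverse x) = inverse (v x)"
proof (cases "x = 0")
  case False
  then have "v x * v (inverse x) = 1" using v_mult[of x "inverse x"] by simp
  moreover have "v x \<noteq> 0" using False by simp
  ultimately show ?thesis by (simp add: field_simps)
qed simp

lemma v_divide: "v (x / y) = v x / v y"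
  by (simp add: divide_inverse v_mult v_inverse)

lemma v_powi: "v (x powi k) = v x powi k"
  by (cases "k \<ge> 0") (auto simp: power_int_def v_power v_inverse)

lemma v_diff_le: "v (x - y) \<le> max (v x) (v y)"
  using v_ultra[of x "-y"] by simp

lemma v_add_le: "v x \<le> B \<Longrightarrow> v y \<le> B \<Longrightarrow> v (x + y) \<le> B"
  using v_ultra[of x y] by simp

lemma v_diff_le': "v x \<le> B \<Longrightarrow> v y \<le> B \<Longrightarrow> v (x - y) \<le> B"
  using v_diff_le[of x y] by simp

lemma v_tri: "v (x - z) \<le> max (v (x - y)) (v (y - z))"
  using v_ultra[of "x - y" "y - z"] by simp

lemma v_strict: assumes "v y < v x" shows "v (x + y) = v x"
proof -
  have "v (x + y) \<le> v x" using v_ultra[of x y] assms by simp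
  moreover have "v x \<le> max (v (x + y)) (v y)" using v_ultra[of "x + y" "- y"] by simp
  ultimately show ?thesis using assms by linarith
qed

lemma v_sum_le:
  assumes "finite S" "\<And>i. i \<in> S \<Longrightarrow> v (f i) \<le> B" "0 \<le> B"
  shows "v (sum f S) \<le> B"
  using assms by (induction S rule: finite_induct) (auto intro!: v_add_le)

lemma v_of_nat_le1: "v (of_nat n) \<le> 1"
  by (induction n) (auto intro: v_add_le)

lemma v_of_int_le1: "v (of_int k) \<le> 1"
proof (cases "k \<ge> 0")
  case True
  then show ?thesis using v_of_nat_le1[of "nat k"] by simp
next
  case False
  then have "of_int k = - (of_nat (nat (-k)) :: 'a)" by simp
  then show ?thesis using v_of_nat_le1[of "nat (-k)"] by simp
qed

definition rho where "rho = v prm"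

lemma rho_pos': "0 < rho" and rho_lt1': "rho < 1" and rho_le1: "rho \<le> 1"
  using rho_pos rho_lt1 by (auto simp: rho_def)

lemma prm_nz: "prm \<noteq> 0" using rho_pos by auto

lemma v_prm_pow: "v (prm ^ n) = rho ^ n" by (simp add: v_power rho_def)

lemma discrete_lt1: assumes "v x < 1" shows "v x \<le> rho"
proof (cases "x = 0")
  case False
  then obtain k where k: "v x = v prm powi k" using v_discrete by blast
  show ?thesis
  proof (cases "k \<ge> 1")
    case True
    have "v prm powi k \<le> v prm powi 1"
      using True rho_pos rho_lt1 by (intro power_int_decreasing) auto
    then show ?thesis using k by (simp add: rho_def)
  next
    case False
    then have "k \<le> 0" by simp
    then have "v prm powi k = inverse (v prm) ^ nat (-k)"
      by (simp add: power_int_def power_inverse)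
    moreover have "inverse (v prm) \<ge> 1" using rho_pos rho_lt1 by (simp add: one_le_inverse_iff)
    ultimately have "v prm powi k \<ge> 1" by (simp add: one_le_power)
    then show ?thesis using k assms by simp
  qed
qed (simp add: rho_def rho_pos less_imp_le)

lemma discrete_gt1: assumes "v x > 1" shows "\<exists>m::nat. m \<ge> 1 \<and> v x = inverse rho ^ m"
proof -
  have "x \<noteq> 0" using assms by auto
  then obtain k where k: "v x = v prm powi k" using v_discrete by blast
  have "k < 0"
  proof (rule ccontr)
    assume "\<not> k < 0"
    then have "v prm powi k \<le> 1" using rho_pos rho_lt1
      by (simp add: power_int_def power_le_one)
    then show False using k assms by simp
  qed
  then have "v x = inverse rho ^ nat (-k)" using k
    by (simp add: power_int_def rho_def power_inverse)
  then show ?thesis using \<open>k < 0\<close> by (intro exI[of _ "nat (-k)"]) auto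
qed

lemma C_diff: assumes "c \<in> C" "c' \<in> C" "c \<noteq> c'" shows "v (c - c') = 1"
proof -
  have le: "v (c - c') \<le> 1" using C_le1[OF assms(1)] C_le1[OF assms(2)] v_diff_le'[of c 1 c'] by simp
  have "\<not> v (c - c') < 1"
  proof
    assume "v (c - c') < 1"
    moreover have "v (c - c) < 1" by simp
    ultimately show False using C_res[of c] C_le1[OF assms(1)] assms by blast
  qed
  then show ?thesis using le by simp
qed

lemma C_nz: assumes "c \<in> C" "c \<noteq> 0" shows "v c = 1"
  using C_diff[OF assms(1) C0 assms(2)] by simp

lemma card_C_gt1: "real (card C) > 1"
proof -
  have "card C > 0" using C_fin C0 by (auto simp: card_gt_0_iff)
  show ?thesis
  proof (rule ccontr)
    assume "\<not> real (card C) > 1"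
    then have "real (card C) * v prm \<le> 1 * v prm" using rho_pos by (intro mult_right_mono) auto
    moreover have "real (card C) * v prm = 1" using rho_card \<open>card C > 0\<close> by simp
    ultimately show False using rho_lt1 by simp
  qed
qed

definition dig :: "'a \<Rightarrow> 'a" where "dig x = (SOME c. c \<in> C \<and> v (x - c) < 1)"
definition rem :: "'a \<Rightarrow> 'a" where "rem x = (x - dig x) / prm"

lemma dig: assumes "v x \<le> 1" shows "dig x \<in> C" "v (x - dig x) \<le> rho"
proof -
  have "\<exists>c. c \<in> C \<and> v (x - c) < 1" using C_res[OF assms] by blast
  then have "dig x \<in> C \<and> v (x - dig x) < 1" unfolding dig_def by (rule someI_ex)
  then show "dig x \<in> C" "v (x - dig x) \<le> rho" using discrete_lt1 by auto
qed

lemma rem: assumes "v x \<le> 1" shows "v (rem x) \<le> 1"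
  using dig(2)[OF assms] rho_pos' by (simp add: rem_def v_divide rho_def[symmetric])

definition digs :: "'a \<Rightarrow> nat \<Rightarrow> 'a" where "digs x j = dig ((rem ^^ j) x)"

lemma rem_iter: "v x \<le> 1 \<Longrightarrow> v ((rem ^^ n) x) \<le> 1"
  by (induction n) (auto intro: rem)

lemma digs_C: "v x \<le> 1 \<Longrightarrow> digs x j \<in> C"
  unfolding digs_def by (intro dig rem_iter)

lemma digs_sum: "v x \<le> 1 \<Longrightarrow> x - (\<Sum>j<n. digs x j * prm ^ j) = prm ^ n * (rem ^^ n) x"
proof (induction n)
  case (Suc n)
  have "x - (\<Sum>j<Suc n. digs x j * prm ^ j) = prm ^ n * (rem ^^ n) x - digs x n * prm ^ n"
    using Suc by (simp add: algebra_simps)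
  also have "\<dots> = prm ^ Suc n * rem ((rem ^^ n) x)"
    using prm_nz by (simp add: rem_def digs_def field_simps)
  finally show ?case by simp
qed simp

lemma digs_approx: "v x \<le> 1 \<Longrightarrow> v (x - (\<Sum>j<n. digs x j * prm ^ j)) \<le> rho ^ n"
  using rem_iter[of x n] rho_pos'
  by (simp add: digs_sum v_mult v_prm_pow mult_left_le)

end


context lfield begin

lemma ptend_unique:
  assumes "p_tendsto v f L" "p_tendsto v f L'" shows "L = L'"
proof -
  have t1: "(\<lambda>n. v (f n - L)) \<longlonglongrightarrow> 0" and t2: "(\<lambda>n. v (f n - L')) \<longlonglongrightarrow> 0"
    using assms by (auto simp: p_tendsto_def)
  have "(\<lambda>n. max (v (f n - L)) (v (f n - L'))) \<longlonglongrightarrow> max 0 0"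
    by (intro tendsto_max t1 t2)
  moreover have "\<forall>n. v (L - L') \<le> max (v (f n - L)) (v (f n - L'))"
    using v_tri v_sym by (metis max.commute)
  ultimately have "v (L - L') \<le> 0"
    by (intro tendsto_le[OF trivial_limit_sequentially, of "\<lambda>n. max (v (f n - L)) (v (f n - L'))" 0
          "\<lambda>n. v (L - L')"]) auto
  then show ?thesis using v_nonneg[of "L - L'"] by simp
qed

lemma ptend_bound:
  assumes "p_tendsto v f L" "\<And>n. v (f n) \<le> B" "0 \<le> B" shows "v L \<le> B"
proof -
  have t1: "(\<lambda>n. v (f n - L)) \<longlonglongrightarrow> 0" using assms by (auto simp: p_tendsto_def)
  have "(\<lambda>n. max (v (f n - L)) B) \<longlonglongrightarrow> max 0 B"
    by (intro tendsto_max t1 tendsto_const)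
  moreover have "\<forall>n. v L \<le> max (v (f n - L)) B"
  proof
    fix n
    have "v L \<le> max (v (L - f n)) (v (f n))" using v_ultra[of "L - f n" "f n"] by simp
    then show "v L \<le> max (v (f n - L)) B" using assms(2)[of n] v_sym[of L "f n"] by linarith
  qed
  ultimately have "v L \<le> max 0 B"
    by (intro tendsto_le[OF trivial_limit_sequentially, of "\<lambda>n. max (v (f n - L)) B" _
          "\<lambda>n. v L"]) auto
  then show ?thesis using assms by simp
qed

lemma sum_int_reindex:
  fixes g :: "int \<Rightarrow> 'b::comm_monoid_add"
  shows "(\<Sum>n\<in>{a..b}. g n) = (\<Sum>j<nat (b - a + 1). g (a + int j))"
  by (rule sum.reindex_bij_witness[where j="\<lambda>n. nat (n - a)" and i="\<lambda>j. a + int j"]) auto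

lemma powi_shift: "(x::'a) \<noteq> 0 \<Longrightarrow> x powi (int j - int M) = x ^ j / x ^ M"
  by (simp add: power_int_diff)

lemma exists_scale: "\<exists>M::nat. v (y * prm ^ M) \<le> 1"
proof (cases "y = 0")
  case False
  then have "v y > 0" using v_pos by blast
  then obtain M where "rho ^ M < 1 / v y" using real_arch_pow_inv[of "1 / v y" rho] rho_pos' rho_lt1' by auto
  then have "v y * rho ^ M \<le> 1" using \<open>v y > 0\<close> by (simp add: field_simps)
  then show ?thesis by (auto simp: v_mult v_prm_pow)
qed simp

lemma v_term_le:
  assumes "c \<in> C" "n \<ge> 0" shows "v (c * prm powi n) \<le> 1"
proof -
  have "v (prm powi n) = rho powi n" by (simp add: v_powi rho_def)
  also have "\<dots> = rho ^ nat n" using assms by (simp add: power_int_def)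
  also have "\<dots> \<le> 1" using rho_pos' rho_le1 by (simp add: power_le_one)
  finally show ?thesis using C_le1[OF assms(1)] v_mult[of c "prm powi n"]
    by (simp add: mult_le_one)
qed

lemma digit_exp_exists: "\<exists>c. digit_exp v prm C y c"
proof -
  obtain M :: nat where M: "v (y * prm ^ M) \<le> 1" using exists_scale by blast
  define x where "x = y * prm ^ M"
  define c where "c n = (if n < - int M then 0 else digs x (nat (n + int M)))" for n
  have cC: "\<forall>n. c n \<in> C" using digs_C[of x] M C0 by (auto simp: c_def x_def)
  have cz: "\<forall>n < - int M. c n = 0" by (auto simp: c_def)
  have S: "(\<Sum>n\<in>{- int m..int m}. c n * prm powi n) = (\<Sum>j<m + M + 1. digs x j * prm ^ j) / prm ^ M"
    if "m \<ge> M" for m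
  proof -
    have "{- int m..int m} = {- int m..<- int M} \<union> {- int M..int m}" using that by auto
    then have "(\<Sum>n\<in>{- int m..int m}. c n * prm powi n) =
        (\<Sum>n\<in>{- int m..<- int M}. c n * prm powi n) + (\<Sum>n\<in>{- int M..int m}. c n * prm powi n)"
      by (simp add: sum.union_disjoint[symmetric] ivl_disj_int)
    also have "(\<Sum>n\<in>{- int m..<- int M}. c n * prm powi n) = 0" by (auto simp: c_def intro!: sum.neutral)
    also have "(\<Sum>n\<in>{- int M..int m}. c n * prm powi n) = (\<Sum>j<m + M + 1. c (- int M + int j) * prm powi (- int M + int j))"
      by (subst sum_int_reindex) (simp add: nat_add_distrib)
    also have "\<dots> = (\<Sum>j<m + M + 1. digs x j * prm ^ j / prm ^ M)"
      using prm_nz by (intro sum.cong) (auto simp: c_def powi_shift)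
    finally show ?thesis by (simp only: sum_divide_distrib add_0_left)
  qed
  have "p_tendsto v (\<lambda>m. \<Sum>n\<in>{- int m..int m}. c n * prm powi n) y"
    unfolding p_tendsto_def
  proof (rule tendsto_sandwich[of "\<lambda>_. 0" _ _ "\<lambda>m. rho ^ (m + 1)"])
    show "\<forall>\<^sub>F m in sequentially. 0 \<le> v ((\<Sum>n\<in>{- int m..int m}. c n * prm powi n) - y)" by simp
    show "\<forall>\<^sub>F m in sequentially. v ((\<Sum>n\<in>{- int m..int m}. c n * prm powi n) - y) \<le> rho ^ (m + 1)"
      unfolding eventually_sequentially
    proof (intro exI allI impI)
      fix m assume "M \<le> m"
      have "(\<Sum>n\<in>{- int m..int m}. c n * prm powi n) - y = - ((x - (\<Sum>j<m + M + 1. digs x j * prm ^ j)) / prm ^ M)"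
        using S[OF \<open>M \<le> m\<close>] prm_nz by (simp add: x_def field_simps)
      then have "v ((\<Sum>n\<in>{- int m..int m}. c n * prm powi n) - y) = v (x - (\<Sum>j<m + M + 1. digs x j * prm ^ j)) / rho ^ M"
        by (simp add: v_divide v_prm_pow)
      also have "\<dots> \<le> rho ^ (m + M + 1) / rho ^ M"
        using digs_approx[of x "m + M + 1"] M rho_pos' by (simp add: x_def divide_right_mono)
      also have "\<dots> = rho ^ (m + 1)" using rho_pos' by (simp add: power_add)
      finally show "v ((\<Sum>n\<in>{- int m..int m}. c n * prm powi n) - y) \<le> rho ^ (m + 1)" .
    qed
    show "(\<lambda>m. rho ^ (m + 1)) \<longlonglongrightarrow> 0"
      using LIMSEQ_Suc[OF LIMSEQ_power_zero[of rho]] rho_pos' rho_lt1' by simp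
  qed simp
  then show ?thesis unfolding digit_exp_def using cC cz by blast
qed

definition Pc :: "nat \<Rightarrow> (int \<Rightarrow> 'a) \<Rightarrow> 'a" where
  "Pc N c = (\<Sum>n\<in>{- int N..-1}. c n * prm powi n)"

lemma Pc_ext: assumes "\<forall>n < - int N. c n = 0" "N \<le> N'" shows "Pc N' c = Pc N c"
  unfolding Pc_def using assms by (intro sum.mono_neutral_right) auto

lemma digit_exp_N: assumes "digit_exp v prm C y c" shows "\<exists>N::nat. \<forall>n < - int N. c n = 0"
proof -
  obtain N :: int where "\<forall>n<N. c n = 0" using assms by (auto simp: digit_exp_def)
  then show ?thesis by (intro exI[of _ "nat (- N)"]) auto
qed

lemma lemA1:
  assumes "digit_exp v prm C y c" "\<forall>n < - int N. c n = 0"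
  shows "p_tendsto v (\<lambda>m. \<Sum>n\<in>{0..int m}. c n * prm powi n) (y - Pc N c)"
proof -
  have t: "(\<lambda>m. v ((\<Sum>n\<in>{- int m..int m}. c n * prm powi n) - y)) \<longlonglongrightarrow> 0"
    using assms by (auto simp: digit_exp_def p_tendsto_def)
  have ev: "\<forall>\<^sub>F m in sequentially. v ((\<Sum>n\<in>{- int m..int m}. c n * prm powi n) - y) =
      v ((\<Sum>n\<in>{0..int m}. c n * prm powi n) - (y - Pc N c))"
    unfolding eventually_sequentially
  proof (intro exI allI impI)
    fix m assume "N \<le> m"
    have "{- int m..int m} = {- int m..-1} \<union> {0..int m}" by auto
    then have "(\<Sum>n\<in>{- int m..int m}. c n * prm powi n) =
        (\<Sum>n\<in>{- int m..-1}. c n * prm powi n) + (\<Sum>n\<in>{0..int m}. c n * prm powi n)"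
      by (simp add: sum.union_disjoint[symmetric] ivl_disj_int)
    moreover have "(\<Sum>n\<in>{- int m..-1}. c n * prm powi n) = Pc N c"
      using Pc_ext[OF assms(2) \<open>N \<le> m\<close>] by (simp add: Pc_def)
    ultimately show "v ((\<Sum>n\<in>{- int m..int m}. c n * prm powi n) - y) =
      v ((\<Sum>n\<in>{0..int m}. c n * prm powi n) - (y - Pc N c))" by (simp add: algebra_simps)
  qed
  show ?thesis unfolding p_tendsto_def using Lim_transform_eventually[OF t ev] .
qed

lemma lemA2:
  assumes "digit_exp v prm C y c" "\<forall>n < - int N. c n = 0"
  shows "v (y - Pc N c) \<le> 1"
proof (rule ptend_bound[OF lemA1[OF assms]])
  fix m
  have cC: "\<forall>n. c n \<in> C" using assms by (auto simp: digit_exp_def)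
  show "v (\<Sum>n\<in>{0..int m}. c n * prm powi n) \<le> 1"
    using cC by (intro v_sum_le v_term_le) auto
qed simp

lemma lemZ:
  assumes "\<forall>j<N. f j = 0 \<or> v (f j) = 1" "v (\<Sum>j<N. f j * prm ^ j) \<le> rho ^ N"
  shows "\<forall>j<N. f j = 0"
  using assms
proof (induction N arbitrary: f)
  case (Suc N)
  define T where "T = (\<Sum>j<N. f (Suc j) * prm ^ j)"
  have S: "(\<Sum>j<Suc N. f j * prm ^ j) = f 0 + prm * T"
    unfolding T_def by (subst sum.lessThan_Suc_shift) (simp add: sum_distrib_left algebra_simps)
  have vT: "v T \<le> 1" unfolding T_def
  proof (intro v_sum_le)
    fix j assume "j \<in> {..<N}"
    then have "v (f (Suc j)) \<le> 1" using Suc.prems(1) by (metis Suc_mono lessThan_iff order.refl v0 zero_le_one)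
    then show "v (f (Suc j) * prm ^ j) \<le> 1"
      using rho_pos' rho_le1 by (simp add: v_mult v_prm_pow mult_le_one power_le_one)
  qed simp_all
  have vpT: "v (prm * T) \<le> rho" using vT rho_pos' by (simp add: v_mult rho_def[symmetric] mult_left_le)
  have "rho ^ Suc N \<le> rho" using rho_pos' rho_le1 by (simp add: mult_left_le power_le_one)
  then have vS: "v (f 0 + prm * T) \<le> rho" using Suc.prems(2) S by simp
  have "v (f 0) \<le> rho" using v_diff_le'[OF vS vpT] by simp
  then have f0: "f 0 = 0" using Suc.prems(1) rho_lt1' by fastforce
  have "v (prm * T) \<le> rho ^ Suc N" using Suc.prems(2) S f0 by simp
  then have "v T \<le> rho ^ N" using rho_pos' by (simp add: v_mult rho_def[symmetric])
  moreover have "\<forall>j<N. f (Suc j) = 0 \<or> v (f (Suc j)) = 1" using Suc.prems(1) by simp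
  ultimately have "\<forall>j<N. f (Suc j) = 0" using Suc.IH[of "\<lambda>j. f (Suc j)"] unfolding T_def by blast
  then show ?case using f0 by (metis less_Suc_eq_0_disj)
qed simp

lemma lemB:
  assumes "digit_exp v prm C y c" "\<forall>n < - int N. c n = 0"
    and "digit_exp v prm C y' c'" "\<forall>n < - int N. c' n = 0"
    and "v (y - y') \<le> 1"
  shows "Pc N c = Pc N c'"
proof -
  have cC: "\<forall>n. c n \<in> C" "\<forall>n. c' n \<in> C" using assms by (auto simp: digit_exp_def)
  have v1: "v (Pc N c - Pc N c') \<le> 1"
  proof -
    have eq: "Pc N c - Pc N c' = ((y' - Pc N c') - (y - Pc N c)) + (y - y')" by (simp add: algebra_simps)
    have h: "v ((y' - Pc N c') - (y - Pc N c)) \<le> 1"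
      using v_diff_le'[OF lemA2[OF assms(3,4)] lemA2[OF assms(1,2)]] .
    show ?thesis unfolding eq by (rule v_add_le[OF h assms(5)])
  qed
  define f where "f j = c (- int N + int j) - c' (- int N + int j)" for j
  have PP: "(Pc N c - Pc N c') * prm ^ N = (\<Sum>j<N. f j * prm ^ j)"
  proof -
    have "Pc N c - Pc N c' = (\<Sum>n\<in>{- int N..-1}. (c n - c' n) * prm powi n)"
      by (simp add: Pc_def sum_subtractf algebra_simps)
    also have "\<dots> = (\<Sum>j<N. f j * prm powi (- int N + int j))"
      by (subst sum_int_reindex) (simp add: f_def)
    finally show ?thesis using prm_nz
      by (simp add: sum_distrib_right powi_shift)
  qed
  have "v (\<Sum>j<N. f j * prm ^ j) \<le> rho ^ N"
    using v1 rho_pos' by (simp add: PP[symmetric] v_mult v_prm_pow mult_left_le)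
  moreover have "\<forall>j<N. f j = 0 \<or> v (f j) = 1"
    using C_diff cC unfolding f_def by (metis right_minus_eq)
  ultimately have f0: "\<forall>j<N. f j = 0" by (rule lemZ[rotated])
  show ?thesis unfolding Pc_def
  proof (rule sum.cong[OF refl])
    fix n assume "n \<in> {- int N..-1}"
    then have "f (nat (n + int N)) = 0" using f0 by auto
    then show "c n * prm powi n = c' n * prm powi n" using \<open>n \<in> _\<close> by (simp add: f_def)
  qed
qed

lemma ipart_eq:
  assumes "digit_exp v prm C y c" "\<forall>n < - int N. c n = 0"
  shows "int_part v prm C y = y - Pc N c"
  unfolding int_part_def
proof (rule the_equality)
  show "\<exists>c'. digit_exp v prm C y c' \<and> p_tendsto v (\<lambda>m. \<Sum>n\<in>{0..int m}. c' n * prm powi n) (y - Pc N c)"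
    using assms lemA1 by blast
next
  fix w assume "\<exists>c'. digit_exp v prm C y c' \<and> p_tendsto v (\<lambda>m. \<Sum>n\<in>{0..int m}. c' n * prm powi n) w"
  then obtain c' where c': "digit_exp v prm C y c'" "p_tendsto v (\<lambda>m. \<Sum>n\<in>{0..int m}. c' n * prm powi n) w"
    by blast
  obtain N' where N': "\<forall>n < - int N'. c' n = 0" using digit_exp_N[OF c'(1)] by blast
  have w: "w = y - Pc N' c'" using ptend_unique[OF c'(2) lemA1[OF c'(1) N']] .
  define N2 where "N2 = max N N'"
  have z1: "\<forall>n < - int N2. c n = 0" and z2: "\<forall>n < - int N2. c' n = 0"
    using assms(2) N' by (auto simp: N2_def)
  have "Pc N' c' = Pc N2 c'" using Pc_ext[OF N', of N2] by (simp add: N2_def)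
  also have "\<dots> = Pc N2 c" using lemB[OF c'(1) z2 assms(1) z1] by simp
  also have "\<dots> = Pc N c" using Pc_ext[OF assms(2), of N2] by (simp add: N2_def)
  finally show "w = y - Pc N c" using w by simp
qed

lemma ipart_le1: "v (int_part v prm C y) \<le> 1"
proof -
  obtain c where c: "digit_exp v prm C y c" using digit_exp_exists by blast
  obtain N where N: "\<forall>n < - int N. c n = 0" using digit_exp_N[OF c] by blast
  show ?thesis using ipart_eq[OF c N] lemA2[OF c N] by simp
qed

lemma ipart_diff:
  assumes "v (y - y') \<le> 1"
  shows "int_part v prm C y - int_part v prm C y' = y - y'"
proof -
  obtain c where c: "digit_exp v prm C y c" using digit_exp_exists by blast
  obtain N where N: "\<forall>n < - int N. c n = 0" using digit_exp_N[OF c] by blast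
  obtain c' where c': "digit_exp v prm C y' c'" using digit_exp_exists by blast
  obtain N' where N': "\<forall>n < - int N'. c' n = 0" using digit_exp_N[OF c'] by blast
  define N2 where "N2 = max N N'"
  have z1: "\<forall>n < - int N2. c n = 0" and z2: "\<forall>n < - int N2. c' n = 0"
    using N N' by (auto simp: N2_def)
  have "Pc N2 c = Pc N2 c'" using lemB[OF c z1 c' z2 assms] .
  then show ?thesis using ipart_eq[OF c z1] ipart_eq[OF c' z2] by simp
qed

end


context lfield begin

lemma p_diam_le:
  assumes "\<And>x y. x \<in> U \<Longrightarrow> y \<in> U \<Longrightarrow> v (x - y) \<le> B"
  shows "p_diam v U \<le> ennreal B"
  unfolding p_diam_def using assms by (intro SUP_least ennreal_leI) auto

lemma hcontent_le:
  assumes "S \<subseteq> (\<Union>i. U i)" "\<And>i. p_diam v (U i) \<le> ennreal d"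
  shows "hcontent v s d S \<le> (\<Sum>i. if U i = {} then 0 else if s = 0 then 1
            else ennreal (enn2real (p_diam v (U i)) powr s))"
  unfolding hcontent_def using assms by (intro INF_lower) auto

lemma powr_pow_swap: fixes x :: real assumes "0 < x" shows "(x ^ P) powr s = (x powr s) ^ P"
proof -
  have "(x ^ P) powr s = (x powr real P) powr s" using powr_realpow[OF assms] by simp
  also have "\<dots> = x powr (real P * s)" by (simp add: powr_powr)
  also have "\<dots> = (x powr s) ^ P" using powr_power[of x s P] assms by simp
  finally show ?thesis .
qed

lemma cover_balls:
  assumes S: "S \<subseteq> {x. v (x - z) \<le> delta}" and M: "delta * rho ^ M \<le> 1"
  shows "\<exists>Cen. finite Cen \<and> card Cen \<le> card C ^ (P + M) \<and>
      (\<forall>y\<in>S. \<exists>w\<in>Cen. v (y - w) \<le> rho ^ P)"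
proof -
  define N where "N = P + M"
  define Cen where "Cen = (\<lambda>c. z + (\<Sum>j<N. c j * prm ^ j) / prm ^ M) ` (PiE {..<N} (\<lambda>_. C))"
  have fin: "finite (PiE {..<N} (\<lambda>_. C))" using C_fin by (intro finite_PiE) auto
  have "card Cen \<le> card (PiE {..<N} (\<lambda>_. C))" unfolding Cen_def by (rule card_image_le[OF fin])
  also have "\<dots> = card C ^ N" by (simp add: card_PiE)
  finally have card: "card Cen \<le> card C ^ (P + M)" by (simp add: N_def)
  have cov: "\<exists>w\<in>Cen. v (y - w) \<le> rho ^ P" if "y \<in> S" for y
  proof -
    define x where "x = (y - z) * prm ^ M"
    have "v x = v (y - z) * rho ^ M" by (simp add: x_def v_mult v_prm_pow)
    also have "\<dots> \<le> delta * rho ^ M" using S that rho_pos' by (auto intro: mult_right_mono)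
    finally have vx: "v x \<le> 1" using M by simp
    define c where "c = restrict (digs x) {..<N}"
    have cP: "c \<in> PiE {..<N} (\<lambda>_. C)" using digs_C[OF vx] by (auto simp: c_def)
    have sumc: "(\<Sum>j<N. c j * prm ^ j) = (\<Sum>j<N. digs x j * prm ^ j)" by (simp add: c_def)
    define w where "w = z + (\<Sum>j<N. c j * prm ^ j) / prm ^ M"
    have wC: "w \<in> Cen" unfolding Cen_def w_def using cP by blast
    have "y - w = (x - (\<Sum>j<N. digs x j * prm ^ j)) / prm ^ M"
      using prm_nz by (simp add: w_def x_def sumc field_simps)
    then have "v (y - w) = v (x - (\<Sum>j<N. digs x j * prm ^ j)) / rho ^ M"
      by (simp add: v_divide v_prm_pow)
    also have "\<dots> \<le> rho ^ N / rho ^ M" using digs_approx[OF vx] rho_pos' by (simp add: divide_right_mono)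
    also have "\<dots> = rho ^ P" using rho_pos' by (simp add: N_def power_add)
    finally show ?thesis using wC by blast
  qed
  show ?thesis using card cov Cen_def fin by blast
qed

lemma hcontent_bound:
  assumes S: "S \<subseteq> {x. v (x - z) \<le> delta}" and M: "delta * rho ^ M \<le> 1"
    and s: "s > 0" and d: "rho ^ P \<le> d"
  shows "hcontent v s d S \<le> ennreal (real (card C) ^ (P + M) * (rho ^ P) powr s)"
proof -
  obtain Cen where Cen: "finite Cen" "card Cen \<le> card C ^ (P + M)"
      "\<forall>y\<in>S. \<exists>w\<in>Cen. v (y - w) \<le> rho ^ P"
    using cover_balls[OF S M] by blast
  obtain f where f: "bij_betw f {0..<card Cen} Cen" using ex_bij_betw_nat_finite[OF Cen(1)] by blast
  define U where "U i = (if i < card Cen then {y. v (y - f i) \<le> rho ^ P} else {})" for i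
  have cover: "S \<subseteq> (\<Union>i. U i)"
  proof
    fix y assume "y \<in> S"
    then obtain w where w: "w \<in> Cen" "v (y - w) \<le> rho ^ P" using Cen(3) by blast
    have "w \<in> f ` {0..<card Cen}" using f w by (simp add: bij_betw_def)
    then obtain i where "i < card Cen" "f i = w" by auto
    then show "y \<in> (\<Union>i. U i)" using w by (auto simp: U_def)
  qed
  have diam: "p_diam v (U i) \<le> ennreal (rho ^ P)" for i
  proof (rule p_diam_le)
    fix x y assume "x \<in> U i" "y \<in> U i"
    then have "v (x - f i) \<le> rho ^ P" "v (y - f i) \<le> rho ^ P" by (auto simp: U_def split: if_splits)
    then show "v (x - y) \<le> rho ^ P" using v_tri[of x y "f i"] v_sym[of y "f i"] by auto
  qed
  have diamd: "p_diam v (U i) \<le> ennreal d" for i using diam[of i] d by (meson ennreal_leI order_trans)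
  define t where "t i = (if U i = {} then 0 else if s = 0 then 1
            else ennreal (enn2real (p_diam v (U i)) powr s))" for i
  have t_le: "t i \<le> ennreal ((rho ^ P) powr s)" for i
  proof -
    have "enn2real (p_diam v (U i)) \<le> rho ^ P"
      using enn2real_mono[OF diam[of i]] rho_pos' by simp
    then have "enn2real (p_diam v (U i)) powr s \<le> (rho ^ P) powr s"
      using s by (intro powr_mono2) auto
    then show ?thesis using s by (auto simp: t_def intro: ennreal_leI)
  qed
  have t0: "t i = 0" if "i \<notin> {..<card Cen}" for i using that by (simp add: t_def U_def)
  have "hcontent v s d S \<le> (\<Sum>i. t i)" unfolding t_def by (rule hcontent_le[OF cover diamd])
  also have "(\<Sum>i. t i) = (\<Sum>i<card Cen. t i)" by (rule suminf_finite) (use t0 in auto)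
  also have "\<dots> \<le> (\<Sum>i<card Cen. ennreal ((rho ^ P) powr s))" by (intro sum_mono t_le)
  also have "\<dots> = ennreal (real (card Cen) * (rho ^ P) powr s)"
    by (simp add: ennreal_of_nat_eq_real_of_nat ennreal_mult)
  also have "\<dots> \<le> ennreal (real (card C) ^ (P + M) * (rho ^ P) powr s)"
  proof (intro ennreal_leI mult_right_mono)
    show "real (card Cen) \<le> real (card C) ^ (P + M)" using Cen(2) by (metis of_nat_le_iff of_nat_power)
  qed simp
  finally show ?thesis .
qed

lemma upper_bound:
  assumes S: "S \<subseteq> {x. v (x - z) \<le> delta}" and dpos: "delta > 0" and s: "s > 1"
  shows "hmeasure v s S = 0"
proof -
  obtain M where "rho ^ M < 1 / delta" using real_arch_pow_inv[of "1 / delta" rho] rho_pos' rho_lt1' dpos by auto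
  then have M: "delta * rho ^ M \<le> 1" using dpos by (simp add: field_simps)
  define q where "q = real (card C)"
  have q: "q * rho = 1" using rho_card card_C_gt1 by (simp add: q_def rho_def)
  define g where "g P = q ^ (P + M) * (rho ^ P) powr s" for P
  have g: "g P = q ^ M * (rho powr (s - 1)) ^ P" for P
  proof -
    have "(rho ^ P) powr s = (rho powr s) ^ P" using rho_pos' by (rule powr_pow_swap)
    moreover have "q * rho powr s = rho powr (s - 1)"
      using q rho_pos' by (simp add: powr_diff field_simps)
    ultimately show ?thesis by (simp add: g_def power_add power_mult_distrib[symmetric] algebra_simps)
  qed
  have gl: "g \<longlonglongrightarrow> 0"
  proof -
    have "rho powr (s - 1) < 1" using powr_less_mono2[of "s - 1" rho 1] rho_pos' rho_lt1' s by simp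
    then have "(\<lambda>P. (rho powr (s - 1)) ^ P) \<longlonglongrightarrow> 0" by (intro LIMSEQ_power_zero) auto
    then show ?thesis unfolding g by (intro tendsto_mult_right_zero)
  qed
  have hc: "hcontent v s d S = 0" if dp: "d > 0" for d
  proof -
    obtain P0 where "rho ^ P0 < d" using real_arch_pow_inv[OF dp rho_lt1'] by auto
    then have ev: "\<forall>\<^sub>F P in sequentially. hcontent v s d S \<le> ennreal (g P)"
      unfolding eventually_sequentially g_def q_def
    proof (intro exI allI impI)
      fix P assume "P0 \<le> P"
      then have "rho ^ P \<le> rho ^ P0" using rho_pos' rho_le1 by (intro power_decreasing) auto
      then have "rho ^ P \<le> d" using \<open>rho ^ P0 < d\<close> by simp
      then show "hcontent v s d S \<le> ennreal (real (card C) ^ (P + M) * (rho ^ P) powr s)"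
        using s by (intro hcontent_bound[OF S M]) auto
    qed
    have "(\<lambda>P. ennreal (g P)) \<longlonglongrightarrow> ennreal 0" using gl by (intro tendsto_ennrealI)
    then have "hcontent v s d S \<le> ennreal 0"
      by (intro tendsto_le[OF trivial_limit_sequentially _ tendsto_const ev])
    then show ?thesis by simp
  qed
  show ?thesis unfolding hmeasure_def using hc by (simp add: SUP_constant bot_ennreal)
qed

end


context lfield begin

definition dg :: "'a \<Rightarrow> 'a" where "dg a = (if a \<in> C then a else 0)"

lemma dg_C: "dg a \<in> C" using C0 by (simp add: dg_def)

lemma C_ne: "C \<noteq> {}" using C0 by auto

lemma emeasure_Mi:
  assumes "c \<in> C"
  shows "emeasure (measure_pmf (pmf_of_set C)) {a. dg a = c} = ennreal rho"
proof -
  have "C \<inter> {a. dg a = c} = {c}" using assms by (auto simp: dg_def)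
  then show ?thesis
    using emeasure_pmf_of_set[OF C_ne C_fin, of "{a. dg a = c}"] card_C_gt1
    by (simp add: rho_def rho_card divide_ennreal[symmetric] ennreal_1[symmetric] del: ennreal_1)
qed

lemma mass_lower:
  fixes Phi :: "(nat \<Rightarrow> 'a) \<Rightarrow> 'a" and free :: "nat \<Rightarrow> bool" and E :: "'a set"
  assumes img: "\<And>w. Phi w \<in> E"
    and sep: "\<And>w w' D j. v (Phi w - Phi w') \<le> D \<Longrightarrow> free j \<Longrightarrow> rho ^ j > D \<Longrightarrow> dg (w j) = dg (w' j)"
    and cnt: "\<And>P. s * real P \<le> real (card {j. j < P \<and> free j}) + K0"
    and s: "0 < s"
  shows "hmeasure v s E > 0"
proof -
  define Mi where "Mi = measure_pmf (pmf_of_set C)"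
  define MM where "MM = PiM (UNIV :: nat set) (\<lambda>_. Mi)"
  interpret PP: product_prob_space "\<lambda>_::nat. Mi" UNIV
    unfolding product_prob_space_def product_prob_space_axioms_def product_sigma_finite_def
    by (auto simp: Mi_def prob_space_measure_pmf prob_space_imp_sigma_finite)
  have probMM: "prob_space MM" unfolding MM_def by (rule prob_space_PiM) (simp add: Mi_def prob_space_measure_pmf)
  have spaceMM: "space MM = UNIV" by (simp add: MM_def space_PiM Mi_def)
  have meas1: "{w \<in> space MM. w j \<in> X} \<in> sets MM" for j X
  proof -
    have "(\<lambda>w. w j) \<in> measurable MM Mi" unfolding MM_def by (rule measurable_component_singleton) simp
    from measurable_sets[OF this, of X] show ?thesis by (simp add: Mi_def vimage_def Int_def conj_commute)
  qed
  have measC: "{w \<in> space MM. \<forall>j\<in>J. w j \<in> X j} \<in> sets MM" for J X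
  proof -
    have "{w \<in> space MM. \<forall>j. j \<in> J \<longrightarrow> w j \<in> X j} \<in> sets MM"
    proof (rule sets.sets_Collect_countable_All)
      fix j
      show "{w \<in> space MM. j \<in> J \<longrightarrow> w j \<in> X j} \<in> sets MM"
      proof (cases "j \<in> J")
        case True
        then have "{w \<in> space MM. j \<in> J \<longrightarrow> w j \<in> X j} = {w \<in> space MM. w j \<in> X j}" by blast
        then show ?thesis using meas1[of j "X j"] by metis
      next
        case False
        then have "{w \<in> space MM. j \<in> J \<longrightarrow> w j \<in> X j} = space MM" by blast
        then show ?thesis by (metis sets.top)
      qed
    qed
    then show ?thesis unfolding Ball_def .
  qed
  have cyl: "emeasure MM {w \<in> space MM. \<forall>j\<in>J. w j \<in> {a. dg a = c j}} = ennreal (rho ^ card J)"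
    if "finite J" "\<And>j. c j \<in> C" for J c
  proof -
    have "emeasure MM {w \<in> space MM. \<forall>j\<in>J. w j \<in> {a. dg a = c j}} = (\<Prod>j\<in>J. emeasure Mi {a. dg a = c j})"
      unfolding MM_def by (rule PP.emeasure_PiM_Collect) (use that in \<open>auto simp: Mi_def\<close>)
    also have "\<dots> = (\<Prod>j\<in>J. ennreal rho)" unfolding Mi_def using that by (intro prod.cong refl emeasure_Mi)
    also have "\<dots> = ennreal (rho ^ card J)" using rho_pos' by (simp add: prod_ennreal ennreal_power)
    finally show ?thesis .
  qed
  have rps: "rho powr s < 1" using powr_less_mono2[of s rho 1] rho_pos' rho_lt1' s by simp
  have key: "ennreal (rho powr K0) \<le> (\<Sum>i. if U i = {} then 0 else if s = 0 then 1
            else ennreal (enn2real (p_diam v (U i)) powr s))"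
    if cov: "E \<subseteq> (\<Union>i. U i)" and dU: "\<And>i. p_diam v (U i) \<le> ennreal d" for U d
  proof -
    define t where "t i = (if U i = {} then 0 else if s = 0 then 1
            else ennreal (enn2real (p_diam v (U i)) powr s))" for i
    define W where "W i = (\<exists>w. Phi w \<in> U i)" for i
    define w0 where "w0 i = (SOME w. Phi w \<in> U i)" for i
    define D where "D i = enn2real (p_diam v (U i))" for i
    define Z where "Z i = (if W i then {w. \<forall>j. free j \<and> rho ^ j > D i \<longrightarrow> dg (w j) = dg (w0 i j)} else {})" for i
    have Zmeas: "Z i \<in> sets MM" for i
    proof (cases "W i")
      case True
      have "{w \<in> space MM. \<forall>j. free j \<and> rho ^ j > D i \<longrightarrow> dg (w j) = dg (w0 i j)} \<in> sets MM"
      proof (rule sets.sets_Collect_countable_All)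
        fix j
        show "{w \<in> space MM. free j \<and> rho ^ j > D i \<longrightarrow> dg (w j) = dg (w0 i j)} \<in> sets MM"
        proof (cases "free j \<and> rho ^ j > D i")
          case True
          then have "{w \<in> space MM. free j \<and> rho ^ j > D i \<longrightarrow> dg (w j) = dg (w0 i j)} =
              {w \<in> space MM. w j \<in> {a. dg a = dg (w0 i j)}}" by blast
          then show ?thesis using meas1[of j "{a. dg a = dg (w0 i j)}"] by metis
        next
          case False
          then have "{w \<in> space MM. free j \<and> rho ^ j > D i \<longrightarrow> dg (w j) = dg (w0 i j)} = space MM"
            by blast
          then show ?thesis by (metis sets.top)
        qed
      qed
      then show ?thesis using True by (simp add: Z_def spaceMM)
    qed (simp add: Z_def)
    have Zcov: "space MM \<subseteq> (\<Union>i. Z i)"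
    proof
      fix w assume "w \<in> space MM"
      obtain i where i: "Phi w \<in> U i" using img[of w] cov by blast
      then have Wi: "W i" by (auto simp: W_def)
      have w0: "Phi (w0 i) \<in> U i" unfolding w0_def using Wi[unfolded W_def] by (rule someI_ex)
      have "ennreal (v (Phi w - Phi (w0 i))) \<le> (SUP y\<in>U i. ennreal (v (Phi w - y)))"
        by (rule SUP_upper[OF w0])
      also have "\<dots> \<le> p_diam v (U i)" unfolding p_diam_def by (rule SUP_upper[OF i])
      finally have "ennreal (v (Phi w - Phi (w0 i))) \<le> p_diam v (U i)" .
      then have "v (Phi w - Phi (w0 i)) \<le> D i"
        using enn2real_mono[of "ennreal (v (Phi w - Phi (w0 i)))" "p_diam v (U i)"] dU[of i]
        by (auto simp: D_def top_unique ennreal_less_top intro: le_less_trans[OF _ ennreal_less_top])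
      then have "w \<in> Z i" using sep Wi by (auto simp: Z_def)
      then show "w \<in> (\<Union>i. Z i)" by blast
    qed
    have Zbound: "ennreal (rho powr K0) * emeasure MM (Z i) \<le> t i" for i
    proof (cases "W i")
      case False
      then show ?thesis by (simp add: Z_def)
    next
      case True
      then have Une: "U i \<noteq> {}" by (auto simp: W_def)
      have ti: "t i = ennreal (D i powr s)" using Une s by (simp add: t_def D_def)
      have Dnn: "D i \<ge> 0" by (simp add: D_def)
      have bnd: "ennreal (rho powr K0) * emeasure MM (Z i) \<le> ennreal ((rho ^ P) powr s)"
        if P: "\<And>j. j < P \<Longrightarrow> rho ^ j > D i" for P
      proof -
        define J where "J = {j. j < P \<and> free j}"
        have finJ: "finite J" by (simp add: J_def)
        have sub: "Z i \<subseteq> {w \<in> space MM. \<forall>j\<in>J. w j \<in> {a. dg a = dg (w0 i j)}}"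
          using True P by (auto simp: Z_def J_def spaceMM)
        have "emeasure MM (Z i) \<le> emeasure MM {w \<in> space MM. \<forall>j\<in>J. w j \<in> {a. dg a = dg (w0 i j)}}"
          by (rule emeasure_mono[OF sub measC])
        also have "\<dots> = ennreal (rho ^ card J)" by (rule cyl[OF finJ dg_C])
        finally have m: "emeasure MM (Z i) \<le> ennreal (rho ^ card J)" .
        have "rho ^ card J = rho powr real (card J)" using rho_pos' by (simp add: powr_realpow)
        also have "\<dots> \<le> rho powr (s * real P - K0)"
          using cnt[of P] rho_pos' rho_le1 by (intro powr_mono') (auto simp: J_def)
        finally have "rho powr K0 * rho ^ card J \<le> rho powr K0 * rho powr (s * real P - K0)"
          by (intro mult_left_mono) auto
        also have "\<dots> = rho powr (s * real P)" by (simp add: powr_add[symmetric])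
        also have "\<dots> = (rho ^ P) powr s" using rho_pos'
          by (simp add: powr_realpow[symmetric] powr_powr mult.commute)
        finally have "rho powr K0 * rho ^ card J \<le> (rho ^ P) powr s" .
        then have "ennreal (rho powr K0 * rho ^ card J) \<le> ennreal ((rho ^ P) powr s)" by (rule ennreal_leI)
        then have "ennreal (rho powr K0) * ennreal (rho ^ card J) \<le> ennreal ((rho ^ P) powr s)"
          using rho_pos' by (subst ennreal_mult[symmetric]) auto
        moreover have "ennreal (rho powr K0) * emeasure MM (Z i) \<le> ennreal (rho powr K0) * ennreal (rho ^ card J)"
          using m by (rule mult_left_mono) simp
        ultimately show ?thesis by (rule order_trans[rotated])
      qed
      show ?thesis
      proof (cases "D i > 0")
        case True
        have ex: "\<exists>P. rho ^ P \<le> D i"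
          using real_arch_pow_inv[OF True rho_lt1'] by (auto intro: less_imp_le)
        define P where "P = (LEAST P. rho ^ P \<le> D i)"
        have P1: "rho ^ P \<le> D i" unfolding P_def by (rule LeastI_ex[OF ex])
        have P2: "rho ^ j > D i" if "j < P" for j using not_less_Least[OF that[unfolded P_def]] by simp
        have "(rho ^ P) powr s \<le> D i powr s" using P1 s rho_pos' by (intro powr_mono2) auto
        then show ?thesis using bnd[OF P2] ti by (metis ennreal_leI order_trans)
      next
        case False
        then have D0: "D i = 0" using Dnn by simp
        have all: "ennreal (rho powr K0) * emeasure MM (Z i) \<le> ennreal ((rho powr s) ^ P)" for P
        proof -
          have "\<And>j. j < P \<Longrightarrow> rho ^ j > D i" using D0 rho_pos' by simp
          from bnd[OF this] show ?thesis using powr_pow_swap[OF rho_pos'] by simp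
        qed
        have "(\<lambda>P. ennreal ((rho powr s) ^ P)) \<longlonglongrightarrow> ennreal 0"
          using rps by (intro tendsto_ennrealI LIMSEQ_power_zero) auto
        then have "ennreal (rho powr K0) * emeasure MM (Z i) \<le> ennreal 0"
          by (intro tendsto_le[OF trivial_limit_sequentially _ tendsto_const]) (use all in auto)
        then have "ennreal (rho powr K0) * emeasure MM (Z i) = 0" by (simp only: ennreal_0 le_zero_eq)
        then show ?thesis by (metis zero_le)
      qed
    qed
    have "1 = emeasure MM (space MM)" using prob_space.emeasure_space_1[OF probMM] by simp
    also have "\<dots> \<le> emeasure MM (\<Union>i. Z i)" using Zcov Zmeas by (intro emeasure_mono) auto
    also have "\<dots> \<le> (\<Sum>i. emeasure MM (Z i))" using Zmeas by (intro emeasure_subadditive_countably) auto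
    finally have one: "1 \<le> (\<Sum>i. emeasure MM (Z i))" .
    have "ennreal (rho powr K0) = ennreal (rho powr K0) * 1" by simp
    also have "\<dots> \<le> ennreal (rho powr K0) * (\<Sum>i. emeasure MM (Z i))" using one by (rule mult_left_mono) simp
    also have "\<dots> = (\<Sum>i. ennreal (rho powr K0) * emeasure MM (Z i))" by simp
    also have "\<dots> \<le> (\<Sum>i. t i)" using Zbound by (intro suminf_le) auto
    finally show ?thesis unfolding t_def .
  qed
  have "ennreal (rho powr K0) \<le> hcontent v s 1 E"
    unfolding hcontent_def by (rule INF_greatest) (use key[of _ 1] in auto)
  also have "\<dots> \<le> hmeasure v s E" unfolding hmeasure_def by (rule SUP_upper) simp
  finally have le: "ennreal (rho powr K0) \<le> hmeasure v s E" .
  have "0 < ennreal (rho powr K0)" using rho_pos' by simp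
  then show ?thesis using le by (rule less_le_trans)
qed

end



locale blocks =
  fixes Aw Bw :: "nat \<Rightarrow> nat" and R :: nat
  assumes H1: "\<And>k. Aw k \<le> Bw k" and H2: "\<And>k. Bw k \<le> Aw (Suc k)"
    and H3: "\<And>k. k \<ge> 1 \<Longrightarrow> R * (Aw (Suc k) - Bw k) \<le> Bw k - Aw k"
    and H4: "\<And>k. k \<le> Bw k"
begin

definition fr :: "nat \<Rightarrow> bool" where "fr j \<longleftrightarrow> (\<exists>k. Aw k \<le> j \<and> j < Bw k)"
definition NN :: "nat \<Rightarrow> nat" where "NN P = card {j. j < P \<and> fr j}"
definition cnt :: "nat \<Rightarrow> nat \<Rightarrow> nat" where "cnt a b = card {j. a \<le> j \<and> j < b \<and> fr j}"

lemma Aw_mono: "k \<le> k' \<Longrightarrow> Aw k \<le> Aw k'"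
proof (induction k' rule: dec_induct)
  case (step k')
  then show ?case using H1[of k'] H2[of k'] by linarith
qed simp

lemma Bw_mono: "k \<le> k' \<Longrightarrow> Bw k \<le> Bw k'"
proof (induction k' rule: dec_induct)
  case (step k')
  then show ?case using H1[of "Suc k'"] H2[of k'] by linarith
qed simp

lemma NN_split: "a \<le> b \<Longrightarrow> NN b = NN a + cnt a b"
proof -
  assume ab: "a \<le> b"
  have "{j. j < b \<and> fr j} = {j. j < a \<and> fr j} \<union> {j. a \<le> j \<and> j < b \<and> fr j}" using ab by auto
  moreover have "{j. j < a \<and> fr j} \<inter> {j. a \<le> j \<and> j < b \<and> fr j} = {}" by auto
  moreover have f1: "finite {j. j < a \<and> fr j}" by (rule finite_subset[of _ "{..<a}"]) auto
  moreover have f2: "finite {j. a \<le> j \<and> j < b \<and> fr j}" by (rule finite_subset[of _ "{..<b}"]) auto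
  ultimately show ?thesis unfolding NN_def cnt_def by (simp add: card_Un_disjoint)
qed

lemma cnt_win: assumes "Aw k \<le> a" "a \<le> b" "b \<le> Bw k" shows "cnt a b = b - a"
proof -
  have "{j. a \<le> j \<and> j < b \<and> fr j} = {a..<b}"
  proof (intro set_eqI iffI)
    fix j assume "j \<in> {a..<b}"
    then have "Aw k \<le> j \<and> j < Bw k" using assms by auto
    then show "j \<in> {j. a \<le> j \<and> j < b \<and> fr j}" using \<open>j \<in> {a..<b}\<close> unfolding fr_def by auto
  qed auto
  then show ?thesis by (simp add: cnt_def)
qed

lemma notfr_gap: assumes "Bw k \<le> j" "j < Aw (Suc k)" shows "\<not> fr j"
proof
  assume "fr j"
  then obtain k' where k': "Aw k' \<le> j" "j < Bw k'" by (auto simp: fr_def)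
  show False
  proof (cases "k' \<le> k")
    case True
    then show False using Bw_mono[OF True] k' assms by linarith
  next
    case False
    then have sk: "Suc k \<le> k'" by simp
    show False using Aw_mono[OF sk] k' assms by linarith
  qed
qed

lemma cnt_gap: assumes "Bw k \<le> a" "b \<le> Aw (Suc k)" shows "cnt a b = 0"
proof -
  have "{j. a \<le> j \<and> j < b \<and> fr j} = {}" using notfr_gap[of k] assms by fastforce
  then show ?thesis by (simp add: cnt_def)
qed

lemma notfr_pre: assumes "j < Aw 0" shows "\<not> fr j"
  using assms Aw_mono[of 0] unfolding fr_def by (metis le0 less_le_trans not_less)

lemma NN_pre: "b \<le> Aw 0 \<Longrightarrow> NN b = 0"
proof -
  assume "b \<le> Aw 0"
  then have "{j. j < b \<and> fr j} = {}" using notfr_pre by fastforce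
  then show ?thesis by (simp add: NN_def)
qed

definition K0 where "K0 = Aw 0 + (Aw 1 - Bw 0)"

lemma NN_Aw1: "NN (Aw 1) = Bw 0 - Aw 0"
proof -
  have "NN (Aw 1) = NN (Aw 0) + cnt (Aw 0) (Bw 0) + cnt (Bw 0) (Aw 1)"
    using NN_split[of "Aw 0" "Bw 0"] NN_split[of "Bw 0" "Aw 1"] H1[of 0] H2[of 0] by simp
  then show ?thesis using NN_pre[of "Aw 0"] cnt_win[of 0 "Aw 0" "Bw 0"] cnt_gap[of 0 "Bw 0" "Aw 1"] H1[of 0] by simp
qed

lemma NN_block: assumes "k \<ge> 1" shows "NN (Aw (Suc k)) = NN (Aw k) + (Bw k - Aw k)"
proof -
  have "NN (Aw (Suc k)) = NN (Aw k) + cnt (Aw k) (Bw k) + cnt (Bw k) (Aw (Suc k))"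
    using NN_split[of "Aw k" "Bw k"] NN_split[of "Bw k" "Aw (Suc k)"] H1[of k] H2[of k] by simp
  then show ?thesis using cnt_win[of k "Aw k" "Bw k"] cnt_gap[of k "Bw k" "Aw (Suc k)"] H1[of k] by simp
qed

lemma blocks_ineq: "R * Aw (Suc k) \<le> (R + 1) * NN (Aw (Suc k)) + R * K0"
proof (induction k)
  case 0
  have "R * Aw 1 \<le> R * (Bw 0 - Aw 0) + R * (Aw 0 + (Aw 1 - Bw 0))"
    using H1[of 0] H2[of 0] by (simp add: algebra_simps)
  also have "\<dots> \<le> (R + 1) * (Bw 0 - Aw 0) + R * (Aw 0 + (Aw 1 - Bw 0))" by simp
  finally show ?case using NN_Aw1 by (simp add: K0_def)
next
  case (Suc k)
  define f where "f = Bw (Suc k) - Aw (Suc k)"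
  define x where "x = Aw (Suc (Suc k)) - Bw (Suc k)"
  have Rx: "R * x \<le> f" using H3[of "Suc k"] by (simp add: f_def x_def)
  have A: "Aw (Suc (Suc k)) = Aw (Suc k) + f + x" using H1[of "Suc k"] H2[of "Suc k"] by (simp add: f_def x_def)
  have N: "NN (Aw (Suc (Suc k))) = NN (Aw (Suc k)) + f" using NN_block[of "Suc k"] by (simp add: f_def)
  have "R * Aw (Suc (Suc k)) = R * Aw (Suc k) + R * f + R * x" using A by (simp add: algebra_simps)
  also have "\<dots> \<le> (R + 1) * NN (Aw (Suc k)) + R * K0 + R * f + f" using Suc.IH Rx by linarith
  also have "\<dots> = (R + 1) * NN (Aw (Suc (Suc k))) + R * K0" using N by (simp add: algebra_simps)
  finally show ?case .
qed

lemma count_ineq: "R * P \<le> (R + 1) * NN P + R * K0"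
proof (cases "P < Aw 1")
  case True
  show ?thesis
  proof (cases "P \<le> Aw 0")
    case True
    have "R * P \<le> R * K0" using True by (intro mult_le_mono2) (simp add: K0_def)
    then show ?thesis by (metis le_add2 order_trans)
  next
    case False
    show ?thesis
    proof (cases "P \<le> Bw 0")
      case True
      have "NN P = NN (Aw 0) + cnt (Aw 0) P" using NN_split[of "Aw 0" P] False by simp
      then have "NN P = P - Aw 0" using NN_pre[of "Aw 0"] cnt_win[of 0 "Aw 0" P] False True by simp
      then have "R * P \<le> R * NN P + R * K0" using False by (simp add: K0_def algebra_simps)
      then show ?thesis by (simp add: algebra_simps)
    next
      case False2: False
      have "NN P = NN (Aw 0) + cnt (Aw 0) (Bw 0) + cnt (Bw 0) P"
        using NN_split[of "Aw 0" "Bw 0"] NN_split[of "Bw 0" P] H1[of 0] False2 by simp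
      then have "NN P = Bw 0 - Aw 0"
        using NN_pre[of "Aw 0"] cnt_win[of 0 "Aw 0" "Bw 0"] cnt_gap[of 0 "Bw 0" P] H1[of 0] False2 \<open>P < Aw 1\<close> by simp
      then have "P \<le> NN P + K0" using False2 \<open>P < Aw 1\<close> H1[of 0] by (simp add: K0_def)
      then have "R * P \<le> R * (NN P + K0)" by (rule mult_le_mono2)
      then have "R * P \<le> R * NN P + R * K0" by (simp add: algebra_simps)
      then show ?thesis by (simp add: algebra_simps)
    qed
  qed
next
  case False
  have ex: "\<exists>k. P < Aw k" using H4[of "Suc P"] H2[of "Suc P"] by (intro exI[of _ "Suc (Suc P)"]) linarith
  define k where "k = (LEAST k. P < Aw k)"
  have k1: "P < Aw k" unfolding k_def by (rule LeastI_ex[OF ex])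
  have k2: "\<And>k'. k' < k \<Longrightarrow> Aw k' \<le> P" unfolding k_def using not_less_Least by force
  have "k \<ge> 2"
  proof (rule ccontr)
    assume "\<not> k \<ge> 2"
    then have "k \<le> 1" by simp
    then show False using Aw_mono[of k 1] k1 False by linarith
  qed
  then obtain k' where kk: "k = Suc (Suc k')" by (metis add_2_eq_Suc le_Suc_ex)
  define K where "K = Suc k'"
  have PK: "Aw K \<le> P" "P < Aw (Suc K)" using k1 k2[of K] by (auto simp: K_def kk)
  have IH: "R * Aw K \<le> (R + 1) * NN (Aw K) + R * K0" using blocks_ineq[of k'] by (simp add: K_def)
  have Rx: "R * (Aw (Suc K) - Bw K) \<le> Bw K - Aw K" using H3[of K] by (simp add: K_def)
  show ?thesis
  proof (cases "P \<le> Bw K")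
    case True
    have "NN P = NN (Aw K) + (P - Aw K)" using NN_split[of "Aw K" P] cnt_win[of K "Aw K" P] PK True by simp
    then show ?thesis using IH PK by (simp add: algebra_simps)
  next
    case False
    have "NN P = NN (Aw K) + cnt (Aw K) (Bw K) + cnt (Bw K) P"
      using NN_split[of "Aw K" "Bw K"] NN_split[of "Bw K" P] H1[of K] False by simp
    then have N: "NN P = NN (Aw K) + (Bw K - Aw K)"
      using cnt_win[of K "Aw K" "Bw K"] cnt_gap[of K "Bw K" P] False PK H1[of K] by simp
    have "P - Bw K \<le> Aw (Suc K) - Bw K" using PK by linarith
    then have "R * (P - Bw K) \<le> R * (Aw (Suc K) - Bw K)" by (rule mult_le_mono2)
    then have y: "R * (P - Bw K) \<le> Bw K - Aw K" using Rx by linarith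
    have "P = Aw K + (Bw K - Aw K) + (P - Bw K)" using H1[of K] False PK by simp
    then have e1: "R * P = R * Aw K + R * (Bw K - Aw K) + R * (P - Bw K)"
      by (metis distrib_left)
    have e2: "(R + 1) * NN P = (R + 1) * NN (Aw K) + R * (Bw K - Aw K) + (Bw K - Aw K)"
    proof -
      have "\<And>a f. (R + 1) * (a + f) = (R + 1) * a + R * f + f" by (simp add: algebra_simps)
      then show ?thesis unfolding N .
    qed
    show ?thesis using IH y e1 e2 by linarith
  qed
qed

end


context lfield begin

lemma pow_diff:
  assumes "v a \<le> Q" "v b \<le> Q"
  shows "v (a ^ i - b ^ i) * Q \<le> v (a - b) * Q ^ i"
proof (cases i)
  case 0
  then show ?thesis by simp
next
  case (Suc j)
  have Q0: "Q \<ge> 0" using assms(1) v_nonneg[of a] by linarith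
  have eq: "a ^ i - b ^ i = (a - b) * (\<Sum>k<i. b ^ (i - Suc k) * a ^ k)" by (rule power_diff_sumr2)
  have "v (\<Sum>k<i. b ^ (i - Suc k) * a ^ k) \<le> Q ^ j"
  proof (rule v_sum_le)
    fix k assume "k \<in> {..<i}"
    then have ki: "i - Suc k + k = j" using Suc by auto
    have "v (b ^ (i - Suc k) * a ^ k) = v b ^ (i - Suc k) * v a ^ k" by (simp add: v_mult v_power)
    also have "\<dots> \<le> Q ^ (i - Suc k) * Q ^ k"
      using assms by (intro mult_mono power_mono) (auto simp: Q0)
    also have "\<dots> = Q ^ j" using ki by (metis power_add)
    finally show "v (b ^ (i - Suc k) * a ^ k) \<le> Q ^ j" .
  qed (use Q0 in auto)
  then have "v (a ^ i - b ^ i) \<le> v (a - b) * Q ^ j" unfolding eq v_mult by (intro mult_left_mono) auto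
  then have "v (a ^ i - b ^ i) * Q \<le> v (a - b) * Q ^ j * Q" using Q0 by (intro mult_right_mono)
  then show ?thesis using Suc by (simp add: algebra_simps)
qed

lemma lin_err:
  assumes x: "v x \<le> Q" and e: "v e \<le> Q" and Q: "Q > 0" and r: "r \<ge> 1"
  shows "v ((x + e) ^ r - x ^ r - of_nat r * x ^ (r - 1) * e) * Q ^ 2 \<le> v e ^ 2 * Q ^ r"
proof -
  have xe: "v (x + e) \<le> Q" using x e by (rule v_add_le)
  have e1: "(x + e) ^ r - x ^ r = e * (\<Sum>i<r. x ^ (r - Suc i) * (x + e) ^ i)"
    using power_diff_sumr2[of "x + e" r x] by simp
  have e2: "of_nat r * x ^ (r - 1) * e = e * (\<Sum>i<r. x ^ (r - Suc i) * x ^ i)"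
  proof -
    have "x ^ (r - Suc i) * x ^ i = x ^ (r - 1)" if "i < r" for i
    proof -
      have "r - Suc i + i = r - 1" using that by arith
      then show ?thesis by (metis power_add)
    qed
    then have "(\<Sum>i<r. x ^ (r - Suc i) * x ^ i) = (\<Sum>i<r. x ^ (r - 1))" by (intro sum.cong) auto
    then show ?thesis by (simp add: algebra_simps)
  qed
  have e3: "(x + e) ^ r - x ^ r - of_nat r * x ^ (r - 1) * e = e * (\<Sum>i<r. x ^ (r - Suc i) * ((x + e) ^ i - x ^ i))"
  proof -
    have d: "(\<Sum>i<r. x ^ (r - Suc i) * ((x + e) ^ i - x ^ i)) =
        (\<Sum>i<r. x ^ (r - Suc i) * (x + e) ^ i) - (\<Sum>i<r. x ^ (r - Suc i) * x ^ i)"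
      by (simp only: right_diff_distrib sum_subtractf)
    show ?thesis unfolding e1 e2 d by (simp only: right_diff_distrib)
  qed
  have sb: "v (\<Sum>i<r. x ^ (r - Suc i) * ((x + e) ^ i - x ^ i)) \<le> v e * Q ^ (r - 1) / Q"
  proof (rule v_sum_le)
    fix i assume "i \<in> {..<r}"
    then have ki: "r - Suc i + i = r - 1" by auto
    have "v (x ^ (r - Suc i) * ((x + e) ^ i - x ^ i)) * Q = v x ^ (r - Suc i) * (v ((x + e) ^ i - x ^ i) * Q)"
      by (simp add: v_mult v_power)
    also have "\<dots> \<le> Q ^ (r - Suc i) * (v e * Q ^ i)"
    proof -
      have pd: "v ((x + e) ^ i - x ^ i) * Q \<le> v e * Q ^ i" using pow_diff[OF xe x, of i] by simp
      show ?thesis by (rule mult_mono[OF power_mono[OF x v_nonneg] pd]) (use Q in auto)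
    qed
    also have "\<dots> = v e * Q ^ (r - 1)" using ki by (metis mult.left_commute power_add)
    finally show "v (x ^ (r - Suc i) * ((x + e) ^ i - x ^ i)) \<le> v e * Q ^ (r - 1) / Q"
      using Q by (simp add: field_simps)
  qed (use Q in auto)
  have "v ((x + e) ^ r - x ^ r - of_nat r * x ^ (r - 1) * e) = v e * v (\<Sum>i<r. x ^ (r - Suc i) * ((x + e) ^ i - x ^ i))"
    unfolding e3 by (simp add: v_mult)
  also have "\<dots> \<le> v e * (v e * Q ^ (r - 1) / Q)" using sb by (intro mult_left_mono) auto
  finally have "v ((x + e) ^ r - x ^ r - of_nat r * x ^ (r - 1) * e) * Q ^ 2 \<le> v e * (v e * Q ^ (r - 1) / Q) * Q ^ 2"
    using Q by (intro mult_right_mono) auto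
  also have "\<dots> = v e ^ 2 * (Q ^ (r - 1) * Q)" using Q by (simp add: power2_eq_square field_simps)
  also have "Q ^ (r - 1) * Q = Q ^ r" using r by (metis Suc_diff_le diff_Suc_1 power_Suc2)
  finally show ?thesis .
qed

lemma v_coprime:
  fixes p n :: nat
  assumes "prime p" "v (of_nat p) < 1" "\<not> p dvd n"
  shows "v (of_nat n) \<ge> 1"
proof -
  have "coprime p n" using prime_imp_coprime[OF assms(1,3)] .
  then have g: "gcd (int p) (int n) = 1" by (simp add: coprime_iff_gcd_eq_1 gcd_int_int_eq)
  obtain u w :: int where uw: "u * int p + w * int n = 1" using bezout_int[of "int p" "int n"] g by auto
  then have "(of_int u * of_nat p + of_int w * of_nat n :: 'a) = 1"
    by (metis (mono_tags, opaque_lifting) of_int_1 of_int_add of_int_mult of_int_of_nat_eq)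
  then have "1 \<le> max (v (of_int u * of_nat p)) (v (of_int w * of_nat n))"
    using v_ultra[of "of_int u * of_nat p" "of_int w * (of_nat n :: 'a)"] by simp
  moreover have "v (of_int u * of_nat p :: 'a) < 1"
  proof -
    have "v (of_int u * of_nat p :: 'a) = v (of_int u) * v (of_nat p)" by (rule v_mult)
    also have "\<dots> \<le> 1 * v (of_nat p)" using v_of_int_le1[of u] by (intro mult_right_mono) auto
    finally show ?thesis using assms(2) by simp
  qed
  ultimately have "1 \<le> v (of_int w * of_nat n :: 'a)" by linarith
  also have "\<dots> = v (of_int w) * v (of_nat n :: 'a)" by (rule v_mult)
  also have "\<dots> \<le> 1 * v (of_nat n :: 'a)" using v_of_int_le1[of w] by (intro mult_right_mono) auto
  finally show ?thesis by simp
qed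

lemma v_not_dvd:
  fixes p :: nat
  assumes "prime p" "v (of_nat p) < 1"
  shows "K \<ge> 1 \<Longrightarrow> n > 0 \<Longrightarrow> \<not> p ^ K dvd n \<Longrightarrow> v (of_nat n :: 'a) \<ge> v (of_nat p :: 'a) ^ (K - 1)"
proof (induction K arbitrary: n)
  case 0
  then show ?case by simp
next
  case (Suc K)
  have vp: "v (of_nat p :: 'a) \<le> 1" using assms(2) by simp
  show ?case
  proof (cases "p dvd n")
    case False
    then have "v (of_nat n :: 'a) \<ge> 1" using v_coprime[OF assms] by blast
    moreover have "v (of_nat p :: 'a) ^ (Suc K - 1) \<le> 1" using vp by (simp add: power_le_one)
    ultimately show ?thesis by linarith
  next
    case True
    then obtain n' where n': "n = p * n'" by blast
    have "n' > 0" using Suc.prems n' by (auto intro: gr0I)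
    have K1: "K \<ge> 1"
    proof (rule ccontr)
      assume "\<not> K \<ge> 1"
      then have "K = 0" by simp
      then show False using Suc.prems True by simp
    qed
    have "\<not> p ^ K dvd n'"
    proof
      assume "p ^ K dvd n'"
      then have "p ^ Suc K dvd n" using n' by (simp add: mult_dvd_mono)
      then show False using Suc.prems by simp
    qed
    then have IH: "v (of_nat n' :: 'a) \<ge> v (of_nat p :: 'a) ^ (K - 1)" using Suc.IH K1 \<open>n' > 0\<close> by blast
    have "v (of_nat n :: 'a) = v (of_nat p :: 'a) * v (of_nat n' :: 'a)" by (simp add: n' v_mult)
    also have "\<dots> \<ge> v (of_nat p :: 'a) * v (of_nat p :: 'a) ^ (K - 1)" using IH by (intro mult_left_mono) auto
    finally show ?thesis using K1 by (metis Suc_diff_le diff_Suc_1 power_Suc)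
  qed
qed

end


lemma real_bound:
  fixes a G Q eps t :: real
  assumes a: "a > 0" and G: "G > 0" and Q: "Q > 0" and eps: "eps \<ge> 0" and t: "t \<ge> 0"
    and h1: "eps * (a * G * Q ^ (r - 1)) \<le> 1" and h2: "t * Q ^ 2 \<le> a * eps ^ 2 * Q ^ r" and r: "r \<ge> 1"
  shows "t \<le> 1 / (a * G ^ 2 * Q ^ r)"
proof -
  define P where "P = Q ^ (r - 1)"
  have P: "P > 0" using Q by (simp add: P_def)
  have sr: "Suc (r - 1) = r" using r by simp
  have Qr: "Q ^ r = P * Q" unfolding P_def by (subst sr[symmetric]) (simp only: power_Suc2)
  have "t * Q * Q \<le> a * eps ^ 2 * P * Q" using h2 Qr by (simp add: power2_eq_square mult.assoc)
  then have tQ: "t * Q \<le> a * eps ^ 2 * P" using Q by (simp add: mult_le_cancel_right)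
  have "(eps * (a * G * P)) ^ 2 \<le> 1" using h1 eps a G P by (simp add: P_def power_le_one)
  then have e2: "eps ^ 2 * (a * G * P) ^ 2 \<le> 1" by (simp add: power_mult_distrib)
  have "t * Q * (a * G ^ 2 * P) \<le> a * eps ^ 2 * P * (a * G ^ 2 * P)"
    using tQ a G P by (intro mult_right_mono) auto
  also have "\<dots> = eps ^ 2 * (a * G * P) ^ 2" by (simp add: power2_eq_square algebra_simps)
  finally have "t * (a * G ^ 2 * (P * Q)) \<le> 1" using e2 by (simp add: algebra_simps)
  then show ?thesis using a G P Q Qr by (simp add: field_simps)
qed

locale constr = lfield v prm C for v prm C +
  fixes alpha z :: 'a and r :: "nat \<Rightarrow> nat" and b :: "nat \<Rightarrow> 'a"
    and m g n0 A0 :: nat and kk :: "nat \<Rightarrow> nat" and gam :: real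
  assumes alpha: "alpha \<noteq> 0"
    and vz: "v z = inverse rho ^ m" and m1: "m \<ge> 1"
    and gam: "gam > 0" and vr: "\<And>n. v (of_nat (r n)) \<ge> gam"
    and g: "rho ^ g \<le> v alpha * gam"
    and rpos: "\<And>n. r n > 0" and rmono: "strict_mono r"
    and vb: "\<And>n. v (b n) \<le> 1"
    and A0: "A0 + g \<le> m * (r n0 - 1)"
    and win: "\<And>n. n \<ge> n0 \<Longrightarrow> kk n + g \<le> m * (r (Suc n) - r n)"
begin

definition Q where "Q = v z"

lemma Q_eq: "Q = inverse rho ^ m" by (simp add: Q_def vz)

lemma Q_gt1: "Q > 1"
proof -
  have "inverse rho > 1" using rho_pos' rho_lt1' by (simp add: one_less_inverse)
  then show ?thesis using m1 by (simp add: Q_eq one_less_power)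
qed

lemma Q_pos: "Q > 0" using Q_gt1 by simp

lemma Q_pow: "Q ^ k = inverse (rho ^ (m * k))"
  by (simp add: Q_eq power_mult power_inverse)

definition Bw :: "nat \<Rightarrow> nat" where "Bw k = m * (r (n0 + k) - 1) - g"
definition Aw :: "nat \<Rightarrow> nat" where
  "Aw k = (case k of 0 \<Rightarrow> A0 | Suc j \<Rightarrow> m * (r (n0 + j) - 1) + kk (n0 + j))"

lemma Aw0[simp]: "Aw 0 = A0" and AwS[simp]: "Aw (Suc j) = m * (r (n0 + j) - 1) + kk (n0 + j)"
  by (simp_all add: Aw_def)

lemma r_mono: "n \<le> n' \<Longrightarrow> r n \<le> r n'" using rmono by (simp add: strict_mono_less_eq)

lemma r_ge: "r n \<ge> n + 1"
proof (induction n)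
  case 0 then show ?case using rpos[of 0] by simp
next
  case (Suc n)
  have "r n < r (Suc n)" using rmono by (simp add: strict_mono_def)
  then show ?case using Suc by simp
qed

lemma big: "A0 + g \<le> m * (r (n0 + k) - 1)"
proof -
  have "r n0 - 1 \<le> r (n0 + k) - 1" using r_mono[of n0 "n0 + k"] by simp
  then have "m * (r n0 - 1) \<le> m * (r (n0 + k) - 1)" by (rule mult_le_mono2)
  then show ?thesis using A0 by linarith
qed

lemma big': "n \<ge> n0 \<Longrightarrow> g \<le> m * (r n - 1)"
  using big[of "n - n0"] by simp

lemma Bw_ge_A0: "A0 \<le> Bw k" using big[of k] by (simp add: Bw_def)

lemma Bw_Suc: "Bw k + 1 \<le> Bw (Suc k)"
proof -
  have "r (n0 + k) < r (n0 + Suc k)" using rmono by (simp add: strict_mono_def)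
  then have "r (n0 + k) - 1 + 1 \<le> r (n0 + Suc k) - 1" using rpos[of "n0 + k"] by linarith
  then have "m * (r (n0 + k) - 1 + 1) \<le> m * (r (n0 + Suc k) - 1)" by (rule mult_le_mono2)
  then have "m * (r (n0 + k) - 1) + 1 \<le> m * (r (n0 + Suc k) - 1)" using m1 by (simp add: algebra_simps)
  then show ?thesis using big[of k] by (simp add: Bw_def)
qed

lemma Bw_mono: "k \<le> k' \<Longrightarrow> Bw k \<le> Bw k'"
proof (induction k' rule: dec_induct)
  case (step k') then show ?case using Bw_Suc[of k'] by linarith
qed simp

lemma Bw_ge: "k \<le> Bw k"
proof (induction k)
  case (Suc k) then show ?case using Bw_Suc[of k] by linarith
qed simp

lemma Aw_le_Bw: "Aw k \<le> Bw k"
proof (cases k)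
  case 0 then show ?thesis using big[of 0] by (simp add: Bw_def)
next
  case (Suc j)
  define n where "n = n0 + j"
  have w: "kk n + g \<le> m * (r (Suc n) - r n)" using win[of n] by (simp add: n_def)
  have "m * (r (Suc n) - r n) = m * (r (Suc n) - 1) - m * (r n - 1)"
    using r_mono[of n "Suc n"] rpos[of n] by (simp add: diff_mult_distrib2[symmetric])
  moreover have "m * (r n - 1) \<le> m * (r (Suc n) - 1)" using r_mono[of n "Suc n"] by (intro mult_le_mono2) simp
  ultimately have "m * (r n - 1) + kk n + g \<le> m * (r (Suc n) - 1)" using w by linarith
  then show ?thesis using Suc by (simp add: Bw_def n_def)
qed

lemma Bw_le_Aw: "Bw k \<le> Aw (Suc k)" by (simp add: Bw_def)

lemma Aw_ge_A0: "A0 \<le> Aw k"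
  by (cases k) (use Bw_ge_A0 Bw_le_Aw in \<open>auto intro: order_trans\<close>)

definition free :: "nat \<Rightarrow> bool" where "free i \<longleftrightarrow> (\<exists>k. Aw k \<le> i \<and> i < Bw k)"

definition W :: "(nat \<Rightarrow> 'a) \<Rightarrow> nat \<Rightarrow> 'a" where
  "W w k = (\<Sum>i\<in>{Aw k..<Bw k}. dg (w i) * prm ^ i)"

definition corr :: "nat \<Rightarrow> 'a \<Rightarrow> 'a" where
  "corr n x = (b n - int_part v prm C (alpha * x ^ r n)) / (alpha * of_nat (r n) * x ^ (r n - 1))"

primrec X :: "(nat \<Rightarrow> 'a) \<Rightarrow> nat \<Rightarrow> 'a" where
  "X w 0 = z + W w 0"
| "X w (Suc k) = X w k + corr (n0 + k) (X w k) + W w (Suc k)"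

definition Phi :: "(nat \<Rightarrow> 'a) \<Rightarrow> 'a" where "Phi w = (SOME L. p_tendsto v (X w) L)"

lemma rho_pow_mono: "a \<le> b' \<Longrightarrow> rho ^ b' \<le> rho ^ a"
  using rho_pos' rho_le1 by (intro power_decreasing) auto

lemma vW: "v (W w k) \<le> rho ^ Aw k"
  unfolding W_def
proof (rule v_sum_le)
  fix i assume "i \<in> {Aw k..<Bw k}"
  then have "rho ^ i \<le> rho ^ Aw k" by (intro rho_pow_mono) auto
  moreover have "v (dg (w i)) \<le> 1" using C_le1[OF dg_C] .
  moreover have "v (dg (w i)) * rho ^ i \<le> 1 * rho ^ i"
    using \<open>v (dg (w i)) \<le> 1\<close> rho_pos' by (intro mult_right_mono) auto
  ultimately show "v (dg (w i) * prm ^ i) \<le> rho ^ Aw k"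
    by (simp add: v_mult v_prm_pow)
qed (use rho_pos' in \<open>auto intro: zero_le_power less_imp_le\<close>)

lemma vcorr:
  assumes "v x = Q" "n \<ge> n0"
  shows "v (corr n x) \<le> rho ^ (m * (r n - 1) - g)"
proof -
  have x0: "x \<noteq> 0" using assms Q_pos by auto
  have num: "v (b n - int_part v prm C (alpha * x ^ r n)) \<le> 1" using vb ipart_le1 by (intro v_diff_le')
  have den: "v (alpha * of_nat (r n) * x ^ (r n - 1)) = v alpha * v (of_nat (r n)) * Q ^ (r n - 1)"
    using assms by (simp add: v_mult v_power)
  have va: "v alpha > 0" using alpha v_pos by blast
  have "v alpha * gam * Q ^ (r n - 1) \<le> v alpha * v (of_nat (r n)) * Q ^ (r n - 1)"
    using vr[of n] va Q_pos by (intro mult_right_mono mult_left_mono) auto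
  moreover have "rho ^ g * Q ^ (r n - 1) \<le> v alpha * gam * Q ^ (r n - 1)"
    using g Q_pos by (intro mult_right_mono) auto
  ultimately have d2: "rho ^ g * Q ^ (r n - 1) \<le> v (alpha * of_nat (r n) * x ^ (r n - 1))"
    using den by linarith
  have d2pos: "rho ^ g * Q ^ (r n - 1) > 0" using rho_pos' Q_pos by simp
  have "v (corr n x) \<le> 1 / (rho ^ g * Q ^ (r n - 1))"
    unfolding corr_def v_divide using num d2 d2pos
    by (meson divide_le_cancel frac_le less_le_trans zero_le_one order.strict_implies_order)
  also have "\<dots> = rho ^ (m * (r n - 1)) / rho ^ g" using rho_pos' by (simp add: Q_pow field_simps)
  also have "\<dots> = rho ^ (m * (r n - 1) - g)" using big'[OF assms(2)] rho_pos' by (simp add: power_diff)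
  finally show ?thesis .
qed

lemma rhoA0_lt: "rho ^ A0 < Q"
proof -
  have "rho ^ A0 \<le> 1" using rho_pos' rho_le1 by (simp add: power_le_one)
  then show ?thesis using Q_gt1 by linarith
qed

lemma near_z: assumes "v (y - z) \<le> rho ^ A0" shows "v y = Q"
proof -
  have lt: "v (y - z) < v z" using assms rhoA0_lt by (simp add: Q_def)
  have "v (z + (y - z)) = v z" by (rule v_strict[OF lt])
  then show ?thesis by (simp add: Q_def)
qed

lemma vX: "v (X w k - z) \<le> rho ^ A0 \<and> v (X w k) = Q"
proof (induction k)
  case 0
  have "v (X w 0 - z) \<le> rho ^ A0" using vW[of w 0] by simp
  then show ?case using near_z by blast
next
  case (Suc k)
  have c0: "v (corr (n0 + k) (X w k)) \<le> rho ^ Bw k"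
    using vcorr[of "X w k" "n0 + k"] Suc by (simp add: Bw_def)
  have c: "v (corr (n0 + k) (X w k)) \<le> rho ^ A0"
    using c0 rho_pow_mono[OF Bw_ge_A0[of k]] by linarith
  have w: "v (W w (Suc k)) \<le> rho ^ A0" using vW[of w "Suc k"] Aw_ge_A0[of "Suc k"] rho_pow_mono order_trans by blast
  have "X w (Suc k) - z = (X w k - z) + corr (n0 + k) (X w k) + W w (Suc k)" by simp
  then have "v (X w (Suc k) - z) \<le> rho ^ A0" using Suc c w by (metis v_add_le)
  then show ?case using near_z by blast
qed

lemma incr: "v (X w (Suc k) - X w k) \<le> rho ^ Bw k"
proof -
  have c: "v (corr (n0 + k) (X w k)) \<le> rho ^ Bw k" using vcorr[of "X w k" "n0 + k"] vX[of w k] by (simp add: Bw_def)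
  have w: "v (W w (Suc k)) \<le> rho ^ Bw k" using vW[of w "Suc k"] Bw_le_Aw[of k] rho_pow_mono order_trans by blast
  show ?thesis using c w by (simp add: v_add_le)
qed

lemma cauchy: "k \<le> j \<Longrightarrow> v (X w j - X w k) \<le> rho ^ Bw k"
proof (induction j rule: dec_induct)
  case base then show ?case using rho_pos' by simp
next
  case (step j)
  have "v (X w (Suc j) - X w j) \<le> rho ^ Bw k"
    using incr[of w j] rho_pow_mono[OF Bw_mono[OF step(1)]] by linarith
  then show ?case using step v_tri[of "X w (Suc j)" "X w k" "X w j"] by simp
qed

lemma conv: "p_tendsto v (X w) (Phi w)"
proof -
  have "\<exists>L. (\<lambda>n. v (X w n - L)) \<longlonglongrightarrow> 0"
  proof (rule complete, intro allI impI)
    fix e :: real assume "e > 0"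
    then obtain N where N: "rho ^ N < e" using real_arch_pow_inv[OF _ rho_lt1'] by blast
    show "\<exists>N. \<forall>m\<ge>N. \<forall>n\<ge>N. v (X w m - X w n) < e"
    proof (intro exI allI impI)
      fix a c assume "N \<le> a" "N \<le> c"
      have "v (X w a - X w c) \<le> max (v (X w a - X w N)) (v (X w N - X w c))" by (rule v_tri)
      also have "\<dots> \<le> rho ^ Bw N" using cauchy[OF \<open>N \<le> a\<close>] cauchy[OF \<open>N \<le> c\<close>] v_sym[of "X w N" "X w c"] by simp
      also have "\<dots> \<le> rho ^ N" using Bw_ge[of N] by (rule rho_pow_mono)
      finally show "v (X w a - X w c) < e" using N by simp
    qed
  qed
  then have "\<exists>L. p_tendsto v (X w) L" by (simp add: p_tendsto_def)
  then show ?thesis unfolding Phi_def by (rule someI_ex)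
qed

lemma ptend_bound2:
  assumes "p_tendsto v f L" "\<And>n. n \<ge> N \<Longrightarrow> v (f n - y) \<le> B" "0 \<le> B"
  shows "v (L - y) \<le> B"
proof -
  have t1: "(\<lambda>n. v (f n - L)) \<longlonglongrightarrow> 0" using assms by (auto simp: p_tendsto_def)
  have "(\<lambda>n. max (v (f n - L)) B) \<longlonglongrightarrow> max 0 B" by (intro tendsto_max t1 tendsto_const)
  moreover have "\<forall>\<^sub>F n in sequentially. v (L - y) \<le> max (v (f n - L)) B"
    unfolding eventually_sequentially
  proof (intro exI allI impI)
    fix n assume "N \<le> n"
    have "v (L - y) \<le> max (v (L - f n)) (v (f n - y))" by (rule v_tri)
    then show "v (L - y) \<le> max (v (f n - L)) B" using assms(2)[OF \<open>N \<le> n\<close>] v_sym[of L "f n"] by linarith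
  qed
  ultimately have "v (L - y) \<le> max 0 B"
    by (intro tendsto_le[OF trivial_limit_sequentially]) (auto intro: tendsto_const)
  then show ?thesis using assms by simp
qed

lemma tail: "v (Phi w - X w k) \<le> rho ^ Bw k"
  using ptend_bound2[OF conv, where N=k and y="X w k" and B="rho ^ Bw k"] cauchy rho_pos' by auto

lemma Phi_ball: "v (Phi w - z) \<le> rho ^ A0" and Phi_Q: "v (Phi w) = Q"
proof -
  have t: "v (Phi w - z) \<le> max (v (Phi w - X w 0)) (v (X w 0 - z))" by (rule v_tri)
  have a: "v (Phi w - X w 0) \<le> rho ^ A0" using tail[of w 0] rho_pow_mono[OF Bw_ge_A0[of 0]] by linarith
  have c: "v (X w 0 - z) \<le> rho ^ A0" using vX[of w 0] by blast
  have "max (v (Phi w - X w 0)) (v (X w 0 - z)) \<le> rho ^ A0" using a c by (rule max.boundedI)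
  then show b1: "v (Phi w - z) \<le> rho ^ A0" using t by linarith
  then show "v (Phi w) = Q" by (rule near_z)
qed

end


context constr begin

definition T1 :: "nat \<Rightarrow> real" where "T1 n = 1 / (v alpha * gam ^ 2 * Q ^ r n)"
definition T2 :: "nat \<Rightarrow> real" where "T2 n = v alpha * rho ^ kk n"

lemma va_pos: "v alpha > 0" using alpha v_pos by blast

lemma constraint:
  assumes T1: "T1 (n0 + k) \<le> 1" and T2: "T2 (n0 + k) \<le> 1"
  shows "v (int_part v prm C (alpha * Phi w ^ r (n0 + k)) - b (n0 + k)) \<le> max (T1 (n0 + k)) (T2 (n0 + k))"
proof -
  define n where "n = n0 + k"
  define x where "x = X w k"
  define R where "R = r n"
  define eps where "eps = corr n x"
  define Y where "Y = x + eps"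
  define Dl where "Dl = b n - int_part v prm C (alpha * x ^ R)"
  define L where "L = (x + eps) ^ R - x ^ R - of_nat R * x ^ (R - 1) * eps"
  define t where "t = alpha * L"
  have R1: "R \<ge> 1" using rpos[of n] by (simp add: R_def)
  have vx: "v x = Q" using vX[of w k] by (simp add: x_def)
  have x0: "x \<noteq> 0" using vx Q_pos by auto
  have vD: "v Dl \<le> 1" unfolding Dl_def using vb ipart_le1 by (intro v_diff_le')
  have veB: "v eps \<le> rho ^ Bw k" using vcorr[OF vx, of n] by (simp add: eps_def n_def Bw_def)
  have veA0: "v eps \<le> rho ^ A0" using veB rho_pow_mono[OF Bw_ge_A0[of k]] by linarith
  have veQ: "v eps \<le> Q" using veA0 rhoA0_lt by linarith
  have Rnz: "(of_nat R :: 'a) \<noteq> 0" using R1 by simp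
  have key: "alpha * of_nat R * x ^ (R - 1) * eps = Dl"
    using alpha Rnz x0 by (simp add: eps_def corr_def Dl_def R_def)
  have diff: "alpha * Y ^ R - alpha * x ^ R = Dl + t"
  proof -
    have "alpha * Y ^ R - alpha * x ^ R = alpha * L + alpha * of_nat R * x ^ (R - 1) * eps"
      by (simp add: Y_def L_def algebra_simps)
    then show ?thesis using key by (simp add: t_def)
  qed
  have vR: "v (of_nat R :: 'a) \<ge> gam" using vr[of n] by (simp add: R_def)
  have h1: "v eps * (v alpha * gam * Q ^ (R - 1)) \<le> 1"
  proof -
    have "v eps * (v alpha * gam * Q ^ (R - 1)) \<le> v eps * (v alpha * v (of_nat R :: 'a) * Q ^ (R - 1))"
      using vR va_pos Q_pos by (intro mult_left_mono mult_right_mono) auto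
    also have "\<dots> = v (alpha * of_nat R * x ^ (R - 1) * eps)" using vx by (simp add: v_mult v_power)
    also have "\<dots> = v Dl" using key by simp
    finally show ?thesis using vD by linarith
  qed
  have h2: "v t * Q ^ 2 \<le> v alpha * v eps ^ 2 * Q ^ R"
  proof -
    have "v L * Q ^ 2 \<le> v eps ^ 2 * Q ^ R" unfolding L_def using lin_err[OF _ veQ Q_pos R1] vx by simp
    then have "v alpha * (v L * Q ^ 2) \<le> v alpha * (v eps ^ 2 * Q ^ R)" using va_pos by (intro mult_left_mono) auto
    then show ?thesis by (simp add: t_def v_mult algebra_simps)
  qed
  have vt: "v t \<le> T1 n"
    unfolding T1_def R_def[symmetric] by (rule real_bound[OF va_pos gam Q_pos v_nonneg v_nonneg h1 h2 R1])
  have T1n: "T1 n \<le> 1" using T1 by (simp add: n_def)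
  have T2n: "T2 n \<le> 1" using T2 by (simp add: n_def)
  have vDt: "v (Dl + t) \<le> 1" using vD vt T1n by (intro v_add_le) auto
  have ipY: "int_part v prm C (alpha * Y ^ R) - b n = t"
  proof -
    have "int_part v prm C (alpha * Y ^ R) - int_part v prm C (alpha * x ^ R) = alpha * Y ^ R - alpha * x ^ R"
      using vDt diff by (intro ipart_diff) simp
    then show ?thesis using diff by (simp add: Dl_def algebra_simps)
  qed
  have XS: "X w (Suc k) = Y + W w (Suc k)" by (simp add: Y_def eps_def x_def n_def)
  have vPY: "v (Phi w - Y) \<le> rho ^ Aw (Suc k)"
  proof -
    have "Phi w - Y = (Phi w - X w (Suc k)) + W w (Suc k)" using XS by simp
    moreover have "v (Phi w - X w (Suc k)) \<le> rho ^ Aw (Suc k)"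
      using tail[of w "Suc k"] rho_pow_mono[OF Aw_le_Bw[of "Suc k"]] by linarith
    ultimately show ?thesis using vW[of w "Suc k"] by (metis v_add_le)
  qed
  have vY: "v Y = Q"
  proof (rule near_z)
    have "Y - z = (x - z) + eps" by (simp add: Y_def)
    moreover have "v (x - z) \<le> rho ^ A0" using vX[of w k] by (simp add: x_def)
    ultimately show "v (Y - z) \<le> rho ^ A0" using veA0 by (metis v_add_le)
  qed
  have vPhi: "v (Phi w) = Q" by (rule Phi_Q)
  have pd: "v (Phi w ^ R - Y ^ R) * Q \<le> v (Phi w - Y) * Q ^ R"
    using pow_diff[of "Phi w" Q Y R] vPhi vY by simp
  have AwS: "Aw (Suc k) = m * (R - 1) + kk n" by (simp add: R_def n_def)
  have QR: "Q ^ R = Q ^ (R - 1) * Q" using R1 by (metis Suc_diff_le diff_Suc_1 power_Suc2)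
  have vPY2: "v (alpha * Phi w ^ R - alpha * Y ^ R) \<le> T2 n"
  proof -
    have "v (Phi w - Y) * Q ^ R \<le> rho ^ Aw (Suc k) * Q ^ R"
      using vPY Q_pos by (intro mult_right_mono) auto
    also have "\<dots> = rho ^ Aw (Suc k) * Q ^ (R - 1) * Q" unfolding QR by (simp only: mult.assoc)
    finally have "v (Phi w ^ R - Y ^ R) * Q \<le> rho ^ Aw (Suc k) * Q ^ (R - 1) * Q" using pd by linarith
    then have "v (Phi w ^ R - Y ^ R) \<le> rho ^ Aw (Suc k) * Q ^ (R - 1)" using Q_pos by simp
    also have "\<dots> = rho ^ kk n" unfolding AwS power_add Q_pow using rho_pos' by (simp add: field_simps)
    finally have "v (Phi w ^ R - Y ^ R) \<le> rho ^ kk n" .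
    then have "v alpha * v (Phi w ^ R - Y ^ R) \<le> v alpha * rho ^ kk n" using va_pos by (intro mult_left_mono) auto
    moreover have "alpha * Phi w ^ R - alpha * Y ^ R = alpha * (Phi w ^ R - Y ^ R)" by (simp add: algebra_simps)
    ultimately show ?thesis by (simp add: v_mult T2_def)
  qed
  have ipP: "int_part v prm C (alpha * Phi w ^ R) - int_part v prm C (alpha * Y ^ R) = alpha * Phi w ^ R - alpha * Y ^ R"
    using vPY2 T2n by (intro ipart_diff) auto
  have "int_part v prm C (alpha * Phi w ^ R) - b n = (alpha * Phi w ^ R - alpha * Y ^ R) + t"
    using ipP ipY by (simp add: algebra_simps)
  then have "v (int_part v prm C (alpha * Phi w ^ R) - b n) \<le> max (v (alpha * Phi w ^ R - alpha * Y ^ R)) (v t)"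
    by (simp add: v_ultra)
  also have "\<dots> \<le> max (T1 n) (T2 n)" using vPY2 vt by (auto simp: le_max_iff_disj)
  finally show ?thesis by (simp add: R_def n_def)
qed

lemma Phi_tend:
  assumes kk: "filterlim kk at_top sequentially"
  shows "p_tendsto v (\<lambda>n. int_part v prm C (alpha * Phi w ^ r n) - b n) 0"
proof -
  define iq where "iq = inverse Q"
  have iq: "0 < iq" "iq < 1" using Q_gt1 by (auto simp: iq_def inverse_less_1_iff)
  have T1eq: "T1 n = (1 / (v alpha * gam ^ 2)) * iq ^ r n" for n
    by (simp add: T1_def iq_def power_inverse field_simps)
  have T1le: "T1 n \<le> (1 / (v alpha * gam ^ 2)) * iq ^ n" for n
  proof -
    have "iq ^ r n \<le> iq ^ n" using r_ge[of n] iq by (intro power_decreasing) auto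
    then show ?thesis unfolding T1eq using va_pos gam by (intro mult_left_mono) auto
  qed
  have T1lim: "T1 \<longlonglongrightarrow> 0"
  proof (rule tendsto_sandwich[of "\<lambda>_. 0" _ _ "\<lambda>n. (1 / (v alpha * gam ^ 2)) * iq ^ n"])
    show "\<forall>\<^sub>F n in sequentially. 0 \<le> T1 n" using va_pos gam Q_pos by (simp add: T1_def)
    show "\<forall>\<^sub>F n in sequentially. T1 n \<le> 1 / (v alpha * gam\<^sup>2) * iq ^ n" using T1le by simp
    show "(\<lambda>n. 1 / (v alpha * gam\<^sup>2) * iq ^ n) \<longlonglongrightarrow> 0"
      using iq by (intro tendsto_mult_right_zero LIMSEQ_power_zero) auto
  qed simp
  have T2lim: "T2 \<longlonglongrightarrow> 0"
  proof -
    have "(\<lambda>j. rho ^ j) \<longlonglongrightarrow> 0" using rho_pos' rho_lt1' by (intro LIMSEQ_power_zero) auto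
    then have "(\<lambda>n. rho ^ kk n) \<longlonglongrightarrow> 0" using filterlim_compose kk by blast
    then show ?thesis unfolding T2_def by (rule tendsto_mult_right_zero)
  qed
  have Mlim: "(\<lambda>n. max (T1 n) (T2 n)) \<longlonglongrightarrow> 0" using tendsto_max[OF T1lim T2lim] by simp
  have ev1: "\<forall>\<^sub>F n in sequentially. T1 n \<le> 1"
    using order_tendstoD(2)[OF T1lim, of 1] by (auto elim: eventually_mono)
  have ev2: "\<forall>\<^sub>F n in sequentially. T2 n \<le> 1"
    using order_tendstoD(2)[OF T2lim, of 1] by (auto elim: eventually_mono)
  have ev3: "\<forall>\<^sub>F n in sequentially. n \<ge> n0" by (rule eventually_ge_at_top)
  have ev: "\<forall>\<^sub>F n in sequentially. v (int_part v prm C (alpha * Phi w ^ r n) - b n - 0) \<le> max (T1 n) (T2 n)"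
    using ev1 ev2 ev3
  proof eventually_elim
    case (elim n)
    then show ?case using constraint[of "n - n0" w] by simp
  qed
  show ?thesis unfolding p_tendsto_def
    by (rule tendsto_sandwich[OF _ ev _ Mlim]) auto
qed

lemma W_dep:
  assumes "\<And>i. Aw k \<le> i \<Longrightarrow> i < Bw k \<Longrightarrow> dg (w i) = dg (w' i)"
  shows "W w k = W w' k"
  unfolding W_def using assms by (intro sum.cong) auto

lemma X_dep:
  assumes "\<And>i. free i \<Longrightarrow> i < Bw k \<Longrightarrow> dg (w i) = dg (w' i)"
  shows "X w k = X w' k"
  using assms
proof (induction k)
  case 0
  have "W w 0 = W w' 0"
  proof (rule W_dep)
    fix i assume "Aw 0 \<le> i" "i < Bw 0"
    then have "free i" unfolding free_def by blast
    then show "dg (w i) = dg (w' i)" using 0 \<open>i < Bw 0\<close> by blast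
  qed
  then show ?case by simp
next
  case (Suc k)
  have "X w k = X w' k"
    using Suc.prems Bw_mono[of k "Suc k"] by (intro Suc.IH) auto
  moreover have "W w (Suc k) = W w' (Suc k)"
  proof (rule W_dep)
    fix i assume "Aw (Suc k) \<le> i" "i < Bw (Suc k)"
    then have "free i" unfolding free_def by blast
    then show "dg (w i) = dg (w' i)" using Suc.prems \<open>i < Bw (Suc k)\<close> by blast
  qed
  ultimately show ?case by simp
qed

lemma sep_main:
  assumes fi: "free i0" and agree: "\<And>i. i < i0 \<Longrightarrow> free i \<Longrightarrow> dg (w i) = dg (w' i)"
    and ne: "dg (w i0) \<noteq> dg (w' i0)"
  shows "v (Phi w - Phi w') = rho ^ i0"
proof -
  obtain k0 where k0: "Aw k0 \<le> i0" "i0 < Bw k0" using fi by (auto simp: free_def)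
  have XW: "X w k0 - X w' k0 = W w k0 - W w' k0"
  proof (cases k0)
    case 0 then show ?thesis by simp
  next
    case (Suc k)
    have "X w k = X w' k"
    proof (rule X_dep)
      fix i assume "free i" "i < Bw k"
      moreover have "Aw (Suc k) \<le> i0" using k0 Suc by simp
      ultimately have "i < i0" using Bw_le_Aw[of k] by linarith
      then show "dg (w i) = dg (w' i)" using agree \<open>free i\<close> by blast
    qed
    then show ?thesis using Suc by simp
  qed
  define f where "f i = (dg (w i) - dg (w' i)) * prm ^ i" for i
  have Wd: "W w k0 - W w' k0 = (\<Sum>i\<in>{Aw k0..<Bw k0}. f i)"
    by (simp add: W_def f_def sum_subtractf algebra_simps)
  have split: "{Aw k0..<Bw k0} = {Aw k0..<i0} \<union> ({i0} \<union> {i0<..<Bw k0})" using k0 by auto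
  have zero: "(\<Sum>i\<in>{Aw k0..<i0}. f i) = 0"
  proof (rule sum.neutral, intro ballI)
    fix i assume "i \<in> {Aw k0..<i0}"
    then have "free i" "i < i0" using k0 by (auto simp: free_def)
    then show "f i = 0" using agree by (simp add: f_def)
  qed
  have "(\<Sum>i\<in>{Aw k0..<Bw k0}. f i) = (\<Sum>i\<in>{Aw k0..<i0}. f i) + (f i0 + (\<Sum>i\<in>{i0<..<Bw k0}. f i))"
    unfolding split by (subst sum.union_disjoint) (auto simp: sum.union_disjoint)
  then have Wd2: "W w k0 - W w' k0 = f i0 + (\<Sum>i\<in>{i0<..<Bw k0}. f i)" using Wd zero by simp
  have vf: "v (f i0) = rho ^ i0" using C_diff[OF dg_C dg_C ne] by (simp add: f_def v_mult v_prm_pow)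
  have small: "rho ^ Suc i0 < rho ^ i0" using rho_pos' rho_lt1' by simp
  have vrest: "v (\<Sum>i\<in>{i0<..<Bw k0}. f i) \<le> rho ^ Suc i0"
  proof (rule v_sum_le)
    fix i assume "i \<in> {i0<..<Bw k0}"
    then have "rho ^ i \<le> rho ^ Suc i0" by (intro rho_pow_mono) auto
    moreover have "v (dg (w i) - dg (w' i)) \<le> 1" using C_le1[OF dg_C] by (intro v_diff_le') auto
    moreover have "v (dg (w i) - dg (w' i)) * rho ^ i \<le> 1 * rho ^ i"
      using calculation(2) rho_pos' by (intro mult_right_mono) auto
    ultimately show "v (f i) \<le> rho ^ Suc i0" by (simp add: f_def v_mult v_prm_pow)
  qed (use rho_pos' in \<open>auto intro: zero_le_power less_imp_le\<close>)
  have t1: "v (Phi w - X w k0) \<le> rho ^ Suc i0" using tail[of w k0] rho_pow_mono[of "Suc i0" "Bw k0"] k0 by force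
  have t2: "v (Phi w' - X w' k0) \<le> rho ^ Suc i0" using tail[of w' k0] rho_pow_mono[of "Suc i0" "Bw k0"] k0 by force
  define B where "B = (\<Sum>i\<in>{i0<..<Bw k0}. f i) + ((Phi w - X w k0) - (Phi w' - X w' k0))"
  have vB: "v B \<le> rho ^ Suc i0" unfolding B_def by (rule v_add_le[OF vrest v_diff_le'[OF t1 t2]])
  have eq: "Phi w - Phi w' = f i0 + B" using XW Wd2 by (simp add: B_def algebra_simps)
  have "v (f i0 + B) = v (f i0)" using vB small vf by (intro v_strict) linarith
  then show ?thesis using eq vf by simp
qed

lemma sep:
  assumes "v (Phi w - Phi w') \<le> D" "free j" "rho ^ j > D"
  shows "dg (w j) = dg (w' j)"
proof (rule ccontr)
  assume nj: "dg (w j) \<noteq> dg (w' j)"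
  define P where "P i = (free i \<and> dg (w i) \<noteq> dg (w' i))" for i
  have Pj: "P j" using assms(2) nj by (simp add: P_def)
  define i0 where "i0 = (LEAST i. P i)"
  have P0: "P i0" unfolding i0_def by (rule LeastI[of P j, OF Pj])
  have le: "i0 \<le> j" unfolding i0_def by (rule Least_le[of P j, OF Pj])
  have ag: "\<And>i. i < i0 \<Longrightarrow> free i \<Longrightarrow> dg (w i) = dg (w' i)"
    using not_less_Least[of _ P] unfolding i0_def P_def by blast
  have "v (Phi w - Phi w') = rho ^ i0" using sep_main[of i0 w w'] P0 ag by (simp add: P_def)
  moreover have "rho ^ j \<le> rho ^ i0" using le by (rule rho_pow_mono)
  ultimately show False using assms by linarith
qed

end


lemma H3_arith:
  fixes R m g a b kn kp u T :: nat
  assumes T: "T = 2 * (R + 1)" and kn: "kn \<le> u div T" and kp: "kp \<le> u div T"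
    and u: "2 * (R + 1) * g \<le> u" and m: "m \<ge> 1" and b: "b = a + m * u" and gb: "g \<le> b"
  shows "R * ((b + kn) - (b - g)) \<le> (b - g) - (a + kp)"
proof -
  define w where "w = u div T"
  have Tw: "T * w \<le> u" by (simp add: w_def)
  have e1: "(b + kn) - (b - g) = kn + g" using gb by simp
  have a: "R * kn \<le> R * w" by (rule mult_le_mono2) (use kn in \<open>simp add: w_def\<close>)
  have e2: "R * (kn + g) + g + kp = R * kn + (R + 1) * g + kp" by (simp add: algebra_simps)
  have e3: "(R + 1) * w = R * w + w" by (simp add: algebra_simps)
  have kp': "kp \<le> w" using kp by (simp add: w_def)
  have "R * (kn + g) + g + kp \<le> (R + 1) * w + (R + 1) * g" using a e2 e3 kp' by linarith
  moreover have "2 * ((R + 1) * w) \<le> u" using Tw T by (simp add: algebra_simps)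
  moreover have "2 * ((R + 1) * g) \<le> u" using u by (simp add: algebra_simps)
  moreover have "u \<le> m * u" using m by simp
  ultimately have "R * (kn + g) + g + kp \<le> m * u" by linarith
  then show ?thesis using e1 b by simp
qed

lemma hmeasure0_pos:
  fixes v :: "'a::field_char_0 \<Rightarrow> real" and E :: "'a set"
  assumes "E \<noteq> {}"
  shows "hmeasure v 0 E > 0"
proof -
  obtain x0 where x0: "x0 \<in> E" using assms by blast
  have "1 \<le> hcontent v 0 1 E"
    unfolding hcontent_def
  proof (rule INF_greatest)
    fix U :: "nat \<Rightarrow> 'a set" assume "U \<in> {U. E \<subseteq> (\<Union>i. U i) \<and> (\<forall>i. p_diam v (U i) \<le> ennreal 1)}"
    then obtain i where i: "x0 \<in> U i" using x0 by blast
    define t where "t j = (if U j = {} then 0 else if (0::real) = 0 then 1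
            else ennreal (enn2real (p_diam v (U j)) powr 0))" for j :: nat
    have "t i = 1" using i by (auto simp: t_def)
    then have "(\<Sum>j\<in>{i}. t j) = 1" by simp
    moreover have "(\<Sum>j\<in>{i}. t j) \<le> (\<Sum>j. t j)" by (rule sum_le_suminf) auto
    ultimately show "1 \<le> (\<Sum>j. if U j = {} then 0 else if (0::real) = 0 then 1
            else ennreal (enn2real (p_diam v (U j)) powr 0))" unfolding t_def by simp
  qed
  also have "\<dots> \<le> hmeasure v 0 E" unfolding hmeasure_def by (rule SUP_upper) simp
  finally show ?thesis by (simp add: less_le_trans[OF zero_less_one])
qed

theorem proposition7p1:
  fixes v :: "'a::field_char_0 \<Rightarrow> real" and prm :: 'a and C :: "'a set"
    and p :: nat and alpha z :: 'a and K :: nat and delta :: real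
    and r :: "nat \<Rightarrow> nat" and b :: "nat \<Rightarrow> 'a"
  assumes "local_field v prm C"
    and "prime p" and "v (of_nat p) < 1"
    and "alpha \<noteq> 0" and "K > 0" and "v z > 1" and "delta > 0"
    and "strict_mono r" and "\<forall>n. r n > 0"
    and "filterlim (\<lambda>n. real (r (Suc n)) - real (r n)) at_top sequentially"
    and "\<forall>n. \<not> p ^ K dvd r n"
    and "\<forall>n. v (b n) \<le> 1"
  shows "hdim v {x. v (x - z) \<le> delta \<and> v x > 1 \<and>
            p_tendsto v (\<lambda>n. int_part v prm C (alpha * x ^ r n) - b n) 0} = 1"
proof -
  interpret L: lfield v prm C by unfold_locales (rule assms(1))
  define E where "E = {x. v (x - z) \<le> delta \<and> v x > 1 \<and>
            p_tendsto v (\<lambda>n. int_part v prm C (alpha * x ^ r n) - b n) 0}"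
  have up: "hmeasure v s E = 0" if "s > 1" for s
    by (rule L.upper_bound[of E z delta s]) (use assms(7) that in \<open>auto simp: E_def\<close>)
  have low: "hmeasure v s E > 0 \<and> E \<noteq> {}" if s0: "0 < s" and s1: "s < 1" for s
  proof -
    obtain m where m: "m \<ge> 1" "v z = inverse L.rho ^ m" using L.discrete_gt1[OF assms(6)] by blast
    define gam where "gam = v (of_nat p) ^ (K - 1)"
    have p0: "(of_nat p :: 'a) \<noteq> 0" using assms(2) by (simp add: prime_gt_0_nat)
    have gam: "gam > 0" using L.v_pos[OF p0] by (simp add: gam_def)
    have vr: "v (of_nat (r n)) \<ge> gam" for n
      using L.v_not_dvd[OF assms(2,3), of K "r n"] assms(5,9,11) by (simp add: gam_def)
    have va: "v alpha > 0" using L.v_pos[OF assms(4)] .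
    obtain g where g: "L.rho ^ g < v alpha * gam"
      using real_arch_pow_inv[of "v alpha * gam" L.rho] va gam L.rho_lt1' by auto
    obtain A0 where A0: "L.rho ^ A0 < delta"
      using real_arch_pow_inv[of delta L.rho] assms(7) L.rho_lt1' by auto
    define R :: nat where "R = nat \<lceil>1 / (1 - s)\<rceil>"
    have R_ge: "real R \<ge> 1 / (1 - s)" unfolding R_def by linarith
    have R1: "R \<ge> 1"
    proof -
      have "1 / (1 - s) \<ge> 1" using s0 s1 by (simp add: field_simps)
      then show ?thesis using R_ge by linarith
    qed
    have sR: "s * (real R + 1) \<le> real R"
    proof -
      have "real R * (1 - s) \<ge> 1" using R_ge s1 by (simp add: field_simps)
      then show ?thesis using s1 by (simp add: algebra_simps)
    qed
    define T where "T = 2 * (R + 1)"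
    have T0: "T > 0" by (simp add: T_def)
    define D where "D n = r (Suc n) - r n" for n
    have rD: "real (D n) = real (r (Suc n)) - real (r n)" for n
    proof -
      have "r n \<le> r (Suc n)" using assms(8) by (simp add: strict_mono_less_eq)
      then show ?thesis by (simp add: D_def of_nat_diff)
    qed
    have Dlim: "\<exists>N. \<forall>n\<ge>N. B \<le> D n" for B
    proof -
      have "\<forall>\<^sub>F n in sequentially. real B \<le> real (r (Suc n)) - real (r n)"
        using assms(10) by (simp add: filterlim_at_top)
      then obtain N where "\<forall>n\<ge>N. real B \<le> real (r (Suc n)) - real (r n)"
        by (auto simp: eventually_sequentially)
      then show ?thesis using rD by (metis of_nat_le_iff)
    qed
    obtain N1 where N1: "\<And>n. n \<ge> N1 \<Longrightarrow> 2 * (R + 1) * g \<le> D n" using Dlim by blast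
    define n0 where "n0 = N1 + A0 + g + 1"
    define kk where "kk n = min (D n) (D (n - 1)) div T" for n
    have kkD: "kk n \<le> D n div T" "kk n \<le> D (n - 1) div T" for n
      by (auto simp: kk_def div_le_mono)
    have rge: "n \<le> r n" for n using strict_mono_imp_increasing[OF assms(8)] .
    interpret CS: constr v prm C alpha z r b m g n0 A0 kk gam
    proof unfold_locales
      show "alpha \<noteq> 0" by (rule assms(4))
      show "v z = inverse L.rho ^ m" by (rule m(2))
      show "1 \<le> m" by (rule m(1))
      show "0 < gam" by (rule gam)
      show "gam \<le> v (of_nat (r n))" for n by (rule vr)
      show "L.rho ^ g \<le> v alpha * gam" using g by simp
      show "0 < r n" for n using assms(9) by blast
      show "strict_mono r" by (rule assms(8))
      show "v (b n) \<le> 1" for n using assms(12) by blast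
      show "A0 + g \<le> m * (r n0 - 1)"
      proof -
        have "A0 + g \<le> r n0 - 1" using rge[of n0] by (simp add: n0_def)
        also have "\<dots> \<le> m * (r n0 - 1)" using m(1) by simp
        finally show ?thesis .
      qed
      show "kk n + g \<le> m * (r (Suc n) - r n)" if "n0 \<le> n" for n
      proof -
        have Dn: "2 * (R + 1) * g \<le> D n" using N1 that by (simp add: n0_def)
        have "kk n \<le> D n div 2" using kkD(1)[of n] div_le_mono2[of 2 T "D n"] by (simp add: T_def) 
        then have "kk n + g \<le> D n" using Dn by (simp add: algebra_simps)
        also have "\<dots> \<le> m * D n" using m(1) by simp
        finally show ?thesis by (simp add: D_def)
      qed
    qed
    have kklim: "filterlim kk at_top sequentially"
      unfolding filterlim_at_top eventually_sequentially
    proof (intro allI)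
      fix B :: nat
      obtain N where N: "\<And>n. n \<ge> N \<Longrightarrow> T * B \<le> D n" using Dlim by blast
      show "\<exists>N. \<forall>n\<ge>N. B \<le> kk n"
      proof (intro exI allI impI)
        fix n assume "Suc N \<le> n"
        then have "T * B \<le> min (D n) (D (n - 1))" using N by simp
        then have "T * B div T \<le> min (D n) (D (n - 1)) div T" by (rule div_le_mono)
        then show "B \<le> kk n" using T0 by (simp add: kk_def)
      qed
    qed
    interpret BL: blocks CS.Aw CS.Bw R
    proof unfold_locales
      show "CS.Aw k \<le> CS.Bw k" for k by (rule CS.Aw_le_Bw)
      show "CS.Bw k \<le> CS.Aw (Suc k)" for k by (rule CS.Bw_le_Aw)
      show "k \<le> CS.Bw k" for k by (rule CS.Bw_ge)
      show "R * (CS.Aw (Suc k) - CS.Bw k) \<le> CS.Bw k - CS.Aw k" if k1: "1 \<le> k" for k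
      proof -
        obtain k' where k': "k = Suc k'" using k1 by (cases k) auto
        define n where "n = n0 + k"
        have n1: "n - 1 = n0 + k'" by (simp add: n_def k')
        have "N1 \<le> n - 1" by (simp add: n_def k' n0_def)
        then have un: "2 * (R + 1) * g \<le> D (n - 1)" by (rule N1)
        have rr: "r (n - 1) \<le> r n" using assms(8) by (simp add: strict_mono_less_eq)
        have rp: "r (n - 1) > 0" using assms(9) by blast
        have bdec: "m * (r n - 1) = m * (r (n - 1) - 1) + m * D (n - 1)"
        proof -
          have "n = Suc (n - 1)" by (simp add: n_def k')
          then have "D (n - 1) = r n - r (n - 1)" by (metis D_def)
          then have "r n - 1 = (r (n - 1) - 1) + D (n - 1)" using rr rp by simp
          then show ?thesis by (simp add: algebra_simps)
        qed
        have gb: "g \<le> m * (r n - 1)" using CS.big'[of n] by (simp add: n_def)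
        have kn: "kk n \<le> D (n - 1) div T" by (rule kkD(2))
        have kp: "kk (n - 1) \<le> D (n - 1) div T" by (rule kkD(1))
        have "R * ((m * (r n - 1) + kk n) - (m * (r n - 1) - g)) \<le>
            (m * (r n - 1) - g) - (m * (r (n - 1) - 1) + kk (n - 1))"
          by (rule H3_arith[OF T_def kn kp un m(1) bdec gb])
        moreover have "CS.Aw (Suc k) = m * (r n - 1) + kk n" by (simp add: n_def)
        moreover have "CS.Bw k = m * (r n - 1) - g" by (simp add: CS.Bw_def n_def)
        moreover have "CS.Aw k = m * (r (n - 1) - 1) + kk (n - 1)" by (simp add: k' n_def)
        ultimately show ?thesis by simp
      qed
    qed
    have frfree: "BL.fr = CS.free" by (simp add: fun_eq_iff BL.fr_def CS.free_def)
    have inE: "CS.Phi w \<in> E" for w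
    proof -
      have "v (CS.Phi w - z) \<le> delta" using CS.Phi_ball[of w] A0 by linarith
      moreover have "v (CS.Phi w) > 1" using CS.Phi_Q CS.Q_gt1 by simp
      moreover have "p_tendsto v (\<lambda>n. int_part v prm C (alpha * CS.Phi w ^ r n) - b n) 0"
        by (rule CS.Phi_tend[OF kklim])
      ultimately show ?thesis by (simp add: E_def)
    qed
    have cnt: "s * real P \<le> real (card {j. j < P \<and> CS.free j}) + real BL.K0" for P
    proof -
      have ci: "real R * real P \<le> (real R + 1) * real (BL.NN P) + real R * real BL.K0"
        using BL.count_ineq[of P] by (metis (mono_tags, lifting) of_nat_add of_nat_le_iff of_nat_mult of_nat_1)
      have "s * real P * (real R + 1) \<le> real R * real P"
        using sR by (metis mult.commute mult.left_commute mult_right_mono of_nat_0_le_iff)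
      also have "\<dots> \<le> (real R + 1) * real (BL.NN P) + real R * real BL.K0" by (rule ci)
      also have "\<dots> \<le> (real R + 1) * real (BL.NN P) + (real R + 1) * real BL.K0"
        by (intro add_left_mono mult_right_mono) auto
      finally have "s * real P * (real R + 1) \<le> (real (BL.NN P) + real BL.K0) * (real R + 1)"
        by (simp add: algebra_simps)
      then have "s * real P \<le> real (BL.NN P) + real BL.K0"
        by (rule mult_right_le_imp_le) simp
      then show ?thesis by (simp add: BL.NN_def frfree)
    qed
    have "hmeasure v s E > 0"
      by (rule L.mass_lower[of CS.Phi E CS.free s "real BL.K0"]) (use inE CS.sep cnt s0 in auto)
    moreover have "E \<noteq> {}" using inE by blast
    ultimately show ?thesis by blast
  qed
  have low0: "hmeasure v 0 E > 0"
    using low[of "1/2"] by (intro hmeasure0_pos) auto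
  define S where "S = {s. 0 \<le> s \<and> hmeasure v s E = 0}"
  have S1: "1 \<le> x" if "x \<in> S" for x
  proof (rule ccontr)
    assume "\<not> 1 \<le> x"
    moreover have "0 \<le> x" "hmeasure v x E = 0" using that by (auto simp: S_def)
    ultimately show False using low[of x] low0 by (cases "x = 0") auto
  qed
  have S2: "1 + e \<in> S" if "e > 0" for e using up[of "1 + e"] that by (simp add: S_def)
  have "hdim v E = Inf (ereal ` S)" by (simp add: hdim_def S_def)
  also have "\<dots> = 1"
  proof (rule antisym)
    show "Inf (ereal ` S) \<le> 1"
    proof (rule ereal_le_epsilon2)
      fix e :: real assume "0 < e"
      then have "Inf (ereal ` S) \<le> ereal (1 + e)" using S2 by (intro Inf_lower) auto
      then show "Inf (ereal ` S) \<le> 1 + ereal e" by (simp add: add.commute)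
    qed
    show "1 \<le> Inf (ereal ` S)" using S1 by (intro Inf_greatest) auto
  qed
  finally show ?thesis by (simp add: E_def)
qed


end
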